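(* Let $F$ be a distribution function on $\mathbb{R}$ with finite non-zero variance, and consider the location-scale family $F((x-\theta_1)/\theta_2)$, $\theta_1\in\mathbb{R}$, $\theta_2>0$. Let $X^*_{1:n}\le\dots\le X^*_{n:n}$ be the order statistics of an i.i.d. sample of size $n$ from $F((x-\theta_1)/\theta_2)$. Then the classical (Lloyd's) BLUEs of $\theta_1$ and $\theta_2$ based on these order statistics are consistent as $n\to\infty$; moreover, their variances are $O(1/n)$ as $n\to\infty$.
   Context: The classical BLUE of $\theta_k$ ($k=1,2$) based on order statistics is the estimator of the form $\sum_{i=1}^n c_iX^*_{i:n}$ (constants $c_i$ depending on $n$ and $F$ only) that is unbiased for $\theta_k$ for all $(\theta_1,\theta_2)$ and has minimum variance among such estimators. *)

theory Defs
  imports "HOL-Probability.Probability" "HOL-Library.Landau_Symbols"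
begin

text \<open>The baseline law with distribution function F (F = cdf M), and the
  location-scale member F((x - t1)/t2): the law of t1 + t2 * Z, Z ~ M.\<close>
definition loc_scale :: "real measure \<Rightarrow> real \<Rightarrow> real \<Rightarrow> real measure" where
  "loc_scale M t1 t2 = distr M borel (\<lambda>z. t1 + t2 * z)"

definition sample :: "real measure \<Rightarrow> nat \<Rightarrow> real \<Rightarrow> real \<Rightarrow> (nat \<Rightarrow> real) measure" where
  "sample M n t1 t2 = PiM {..<n} (\<lambda>_. loc_scale M t1 t2)"

text \<open>Order statistics X*_{i+1:n} (0-indexed: i < n).\<close>
definition ord_stat :: "nat \<Rightarrow> (nat \<Rightarrow> real) \<Rightarrow> nat \<Rightarrow> real" where
  "ord_stat n x i = sort (map x [0..<n]) ! i"

definition lin_est :: "nat \<Rightarrow> (nat \<Rightarrow> real) \<Rightarrow> (nat \<Rightarrow> real) \<Rightarrow> real" where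
  "lin_est n c x = (\<Sum>i<n. c i * ord_stat n x i)"

definition theta :: "nat \<Rightarrow> real \<Rightarrow> real \<Rightarrow> real" where
  "theta k t1 t2 = (if k = 1 then t1 else t2)"

definition var_of :: "'a measure \<Rightarrow> ('a \<Rightarrow> real) \<Rightarrow> real" where
  "var_of P f = (LINT x|P. (f x - (LINT y|P. f y))\<^sup>2)"

definition unbiased :: "real measure \<Rightarrow> nat \<Rightarrow> nat \<Rightarrow> (nat \<Rightarrow> real) \<Rightarrow> bool" where
  "unbiased M k n c \<longleftrightarrow>
     (\<forall>t1 t2. t2 > 0 \<longrightarrow>
        integrable (sample M n t1 t2) (lin_est n c) \<and>
        (LINT x|sample M n t1 t2. lin_est n c x) = theta k t1 t2)"

definition is_BLUE :: "real measure \<Rightarrow> nat \<Rightarrow> nat \<Rightarrow> (nat \<Rightarrow> real) \<Rightarrow> bool" where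
  "is_BLUE M k n c \<longleftrightarrow> unbiased M k n c \<and>
     (\<forall>c'. unbiased M k n c' \<longrightarrow>
        (\<forall>t1 t2. t2 > 0 \<longrightarrow>
           var_of (sample M n t1 t2) (lin_est n c) \<le> var_of (sample M n t1 t2) (lin_est n c')))"

end

theory Submission
  imports Defs
begin

lemma sum_nth_list: "(\<Sum>i<length xs. g (xs ! i)) = sum_list (map g xs)"
  unfolding sum_list_sum_nth atLeast0LessThan length_map by (rule sum.cong) auto

lemma len_sort_map[simp]: "length (sort (map x [0..<n])) = n" by simp

lemma sum_ord_stat: "(\<Sum>i<n. g (ord_stat n x i)) = (\<Sum>i<n. g (x i))"
proof -
  let ?s = "sort (map x [0..<n])"
  have "(\<Sum>i<n. g (ord_stat n x i)) = sum_list (map g ?s)"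
    using sum_nth_list[where xs="?s" and g=g] by (simp add: ord_stat_def)
  also have "\<dots> = sum_mset (image_mset g (mset ?s))"
    unfolding mset_map[symmetric] sum_mset_sum_list by (rule refl)
  also have "\<dots> = sum_mset (image_mset g (mset (map x [0..<n])))" by simp
  also have "\<dots> = sum_list (map g (map x [0..<n]))"
    unfolding mset_map[symmetric] sum_mset_sum_list by (rule refl)
  also have "\<dots> = (\<Sum>i<n. g (x i))"
    using sum_nth_list[where xs="map x [0..<n]" and g=g] by simp
  finally show ?thesis .
qed



lemma ord_mono: "i \<le> j \<Longrightarrow> j < n \<Longrightarrow> ord_stat n x i \<le> ord_stat n x j"
  unfolding ord_stat_def by (intro sorted_nth_mono) auto

lemma ord_stat_cong: "(\<And>j. j < n \<Longrightarrow> x j = y j) \<Longrightarrow> ord_stat n x = ord_stat n y"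
proof -
  assume "\<And>j. j < n \<Longrightarrow> x j = y j"
  then have e: "map x [0..<n] = map y [0..<n]" by simp
  show ?thesis unfolding ord_stat_def e by (rule refl)
qed

lemma ord_stat_affine:
  assumes "(t2::real) > 0" and that: "i < n"
  shows "ord_stat n (\<lambda>j. t1 + t2 * x j) i = t1 + t2 * ord_stat n x i"
proof -
  let ?f = "\<lambda>v::real. t1 + t2 * v"
  have mono: "mono ?f" using assms by (auto simp: mono_def)
  have "sort (map ?f (map x [0..<n])) = map ?f (sort (map x [0..<n]))"
  proof (rule properties_for_sort)
    show "mset (map ?f (sort (map x [0..<n]))) = mset (map ?f (map x [0..<n]))"
      by (simp only: mset_map mset_sort)
    show "sorted (map ?f (sort (map x [0..<n])))"
      unfolding sorted_map
      by (rule sorted_wrt_mono_rel[OF _ sorted_sort]) (use assms in \<open>auto intro: mult_left_mono\<close>)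
  qed
  then have "sort (map (\<lambda>j. t1 + t2 * x j) [0..<n]) = map ?f (sort (map x [0..<n]))"
    by (simp only: map_map o_def)
  then show ?thesis using that unfolding ord_stat_def by (simp only: nth_map len_sort_map)
qed

lemma ord_sq_le: "i < n \<Longrightarrow> (ord_stat n x i)\<^sup>2 \<le> (\<Sum>j<n. (x j)\<^sup>2)"
proof -
  assume i: "i < n"
  have "(ord_stat n x i)\<^sup>2 \<le> (\<Sum>j<n. (ord_stat n x j)\<^sup>2)"
    using i by (intro member_le_sum) auto
  then show ?thesis using sum_ord_stat[of "\<lambda>v. v\<^sup>2"] by simp
qed

lemma ord_le_count:
  assumes i: "i < n"
  shows "ord_stat n x i \<le> a \<longleftrightarrow> real (Suc i) \<le> (\<Sum>j<n. if x j \<le> a then 1 else 0)"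
proof -
  have cnt: "(\<Sum>j<n. if x j \<le> a then 1 else (0::real)) = real (card {j. j < n \<and> ord_stat n x j \<le> a})"
  proof -
    have "(\<Sum>j<n. if x j \<le> a then 1 else (0::real)) = (\<Sum>j<n. if ord_stat n x j \<le> a then 1 else 0)"
      using sum_ord_stat[of "\<lambda>v. if v \<le> a then 1 else (0::real)"] by simp
    also have "\<dots> = real (card {j\<in>{..<n}. ord_stat n x j \<le> a})"
      by (simp add: sum.If_cases Int_def)
    also have "{j\<in>{..<n}. ord_stat n x j \<le> a} = {j. j < n \<and> ord_stat n x j \<le> a}" by auto
    finally show ?thesis .
  qed
  show ?thesis
  proof
    assume le: "ord_stat n x i \<le> a"
    have "{..i} \<subseteq> {j. j < n \<and> ord_stat n x j \<le> a}"
    proof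
      fix j assume "j \<in> {..i}"
      then have "j \<le> i" by simp
      then have "ord_stat n x j \<le> ord_stat n x i" using ord_mono[of j i n x] i by simp
      then show "j \<in> {j. j < n \<and> ord_stat n x j \<le> a}" using le i \<open>j \<le> i\<close> by simp
    qed
    then have "card {..i} \<le> card {j. j < n \<and> ord_stat n x j \<le> a}"
      by (intro card_mono) auto
    then show "real (Suc i) \<le> (\<Sum>j<n. if x j \<le> a then 1 else 0)" using cnt by simp
  next
    assume h: "real (Suc i) \<le> (\<Sum>j<n. if x j \<le> a then 1 else 0)"
    show "ord_stat n x i \<le> a"
    proof (rule ccontr)
      assume "\<not> ord_stat n x i \<le> a"
      have "{j. j < n \<and> ord_stat n x j \<le> a} \<subseteq> {..<i}"
      proof
        fix j assume j: "j \<in> {j. j < n \<and> ord_stat n x j \<le> a}"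
        show "j \<in> {..<i}"
        proof (rule ccontr)
          assume "j \<notin> {..<i}"
          then have "i \<le> j" by simp
          then have "ord_stat n x i \<le> ord_stat n x j" using ord_mono[of i j n x] j by simp
          then show False using j \<open>\<not> ord_stat n x i \<le> a\<close> by simp
        qed
      qed
      then have "card {j. j < n \<and> ord_stat n x j \<le> a} \<le> card {..<i}"
        by (intro card_mono) simp_all
      then have "card {j. j < n \<and> ord_stat n x j \<le> a} \<le> i" by simp
      then show False using h cnt by simp
    qed
  qed
qed

definition Pb :: "nat \<Rightarrow> (nat \<Rightarrow> real) measure" where
  "Pb n = PiM {..<n} (\<lambda>_. borel)"

lemma ord_stat_meas[measurable]:
  assumes "i < n" shows "(\<lambda>x. ord_stat n x i) \<in> borel_measurable (Pb n)"
proof (rule borel_measurableI_le)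
  fix y
  have "{x \<in> space (Pb n). ord_stat n x i \<le> y} =
        {x \<in> space (Pb n). real (Suc i) \<le> (\<Sum>j<n. if x j \<le> y then 1 else 0)}"
    using ord_le_count[OF assms] by auto
  also have "\<dots> \<in> sets (Pb n)" unfolding Pb_def by measurable
  finally show "{x \<in> space (Pb n). ord_stat n x i \<le> y} \<in> sets (Pb n)" .
qed

lemma lin_est_meas[measurable]: "lin_est n c \<in> borel_measurable (Pb n)"
  unfolding lin_est_def by measurable

context
  fixes M :: "real measure"
  assumes RD: "real_distribution M"
begin

interpretation real_distribution M by (rule RD)

definition P :: "nat \<Rightarrow> (nat \<Rightarrow> real) measure" where
  "P n = PiM {..<n} (\<lambda>_. M)"

lemma sets_P: "sets (P n) = sets (Pb n)"
  unfolding P_def Pb_def by (intro sets_PiM_cong) (auto simp: events_eq_borel)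

lemma space_P: "space (P n) = space (Pb n)"
  using sets_P sets_eq_imp_space_eq by blast

lemma meas_P: "f \<in> borel_measurable (Pb n) \<Longrightarrow> f \<in> borel_measurable (P n)"
  using measurable_cong_sets[OF sets_P refl] by blast

lemma prob_P: "prob_space (P n)"
  unfolding P_def by (intro prob_space_PiM) (simp add: prob_space_axioms)

lemma comp_meas: "i < n \<Longrightarrow> (\<lambda>x. x i) \<in> measurable (P n) M"
  unfolding P_def by (rule measurable_component_singleton) simp

lemma distr_comp: "i < n \<Longrightarrow> distr (P n) M (\<lambda>x. x i) = M"
  unfolding P_def by (rule distr_PiM_component) (simp_all add: prob_space_axioms)

lemma comp_integrable: "i < n \<Longrightarrow> integrable M (f::real\<Rightarrow>real) \<Longrightarrow> integrable (P n) (\<lambda>x. f (x i))"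
  using integrable_distr_eq[OF comp_meas, of i n f] distr_comp[of i n] by simp

lemma comp_integral: "i < n \<Longrightarrow> (f::real\<Rightarrow>real) \<in> borel_measurable M \<Longrightarrow> (\<integral>x. f (x i) \<partial>P n) = (\<integral>x. f x \<partial>M)"
  using integral_distr[OF comp_meas, of i n f] distr_comp[of i n] by simp

end

context
  fixes M :: "real measure"
  assumes RD: "real_distribution M"
begin

interpretation real_distribution M by (rule RD)

lemma comp_rv: "i < n \<Longrightarrow> (\<lambda>x. x i) \<in> borel_measurable (P M n)"
  using measurable_cong_sets[OF refl events_eq_borel] comp_meas[OF RD] by blast

lemma distr_comp_borel: "i < n \<Longrightarrow> distr (P M n) borel (\<lambda>x. x i) = M"
proof -
  assume i: "i < n"
  have "distr (P M n) borel (\<lambda>x. x i) = distr (P M n) M (\<lambda>x. x i)"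
    by (rule distr_cong) (simp_all add: events_eq_borel)
  also have "\<dots> = M" using distr_comp[OF RD i] .
  finally show ?thesis .
qed

lemma indep_coords:
  assumes n: "0 < n"
  shows "prob_space.indep_vars (P M n) (\<lambda>_. borel) (\<lambda>i x. x i) {..<n}"
proof -
  interpret PP: prob_space "P M n" by (rule prob_P[OF RD])
  have "distr (P M n) (PiM {..<n} (\<lambda>_. borel)) (\<lambda>x. \<lambda>i\<in>{..<n}. x i) = P M n"
  proof -
    have "distr (P M n) (PiM {..<n} (\<lambda>_. borel)) (\<lambda>x. \<lambda>i\<in>{..<n}. x i) =
          distr (P M n) (P M n) (\<lambda>x. x)"
    proof (rule distr_cong)
      show "sets (Pi\<^sub>M {..<n} (\<lambda>_. borel)) = sets (P M n)" using sets_P[OF RD] by (simp add: Pb_def)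
      fix x assume "x \<in> space (P M n)"
      then show "(\<lambda>i\<in>{..<n}. x i) = x" by (simp add: P_def[OF RD] space_PiM PiE_def extensional_restrict)
    qed simp
    also have "\<dots> = P M n" by (rule distr_id2) simp
    finally show ?thesis .
  qed
  also have "\<dots> = PiM {..<n} (\<lambda>i. distr (P M n) borel (\<lambda>x. x i))"
    unfolding P_def[OF RD] by (intro PiM_cong) (simp_all add: distr_comp_borel[unfolded P_def[OF RD]])
  finally show ?thesis
    using PP.indep_vars_iff_distr_eq_PiM'[where I="{..<n}" and M'="\<lambda>_. borel" and X="\<lambda>i x. x i"] n comp_rv by auto
qed

lemma indep_blocks:
  assumes A: "A \<subseteq> {..<n}" and B: "B \<subseteq> {..<n}" and AB: "A \<inter> B = {}" and n: "0 < n"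
  shows "prob_space.indep_var (P M n) (PiM A (\<lambda>_. borel)) (\<lambda>x. restrict x A) (PiM B (\<lambda>_. borel)) (\<lambda>x. restrict x B)"
proof -
  interpret PP: prob_space "P M n" by (rule prob_P[OF RD])
  let ?K = "\<lambda>b. if b then A else B"
  have "PP.indep_vars (\<lambda>b. PiM (?K b) (\<lambda>_. borel)) (\<lambda>b \<omega>. restrict (\<lambda>i. \<omega> i) (?K b)) UNIV"
    using A B AB by (intro PP.indep_vars_restrict[OF indep_coords[OF n]])
      (auto simp: disjoint_family_on_def)
  then show ?thesis unfolding PP.indep_var_def
    by (rule PP.indep_vars_cong[THEN iffD1, rotated 3]) (auto split: bool.split)
qed

lemma indep_prod_integral:
  assumes A: "A \<subseteq> {..<n}" and B: "B \<subseteq> {..<n}" and AB: "A \<inter> B = {}" and n: "0 < n"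
    and f[measurable]: "(f::(nat\<Rightarrow>real)\<Rightarrow>real) \<in> borel_measurable (PiM A (\<lambda>_. borel))"
    and g[measurable]: "(g::(nat\<Rightarrow>real)\<Rightarrow>real) \<in> borel_measurable (PiM B (\<lambda>_. borel))"
    and fi: "integrable (P M n) (\<lambda>x. f (restrict x A))"
    and gi: "integrable (P M n) (\<lambda>x. g (restrict x B))"
  shows "(\<integral>x. f (restrict x A) * g (restrict x B) \<partial>P M n) =
         (\<integral>x. f (restrict x A) \<partial>P M n) * (\<integral>x. g (restrict x B) \<partial>P M n)"
proof -
  interpret PP: prob_space "P M n" by (rule prob_P[OF RD])
  have "PP.indep_var borel (f \<circ> (\<lambda>x. restrict x A)) borel (g \<circ> (\<lambda>x. restrict x B))"
    by (rule PP.indep_var_compose[OF indep_blocks[OF A B AB n] f g])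
  from PP.indep_var_lebesgue_integral[OF this] fi gi show ?thesis by (simp add: o_def)
qed

end

definition hk :: "real \<Rightarrow> real \<Rightarrow> real \<Rightarrow> real \<Rightarrow> real" where
  "hk a b u v = a * (u + v) / 2 + b * \<bar>u - v\<bar>"

lemma hk_sq_le: "(hk a b u v)\<^sup>2 \<le> 2 * (\<bar>a\<bar> + \<bar>b\<bar>)\<^sup>2 * (u\<^sup>2 + v\<^sup>2)"
proof -
  have "\<bar>hk a b u v\<bar> \<le> \<bar>a * (u + v) / 2\<bar> + \<bar>b * \<bar>u - v\<bar>\<bar>" unfolding hk_def by (rule abs_triangle_ineq)
  also have "\<bar>a * (u + v) / 2\<bar> \<le> \<bar>a\<bar> * (\<bar>u\<bar> + \<bar>v\<bar>)"
  proof -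
    have "\<bar>a * (u + v) / 2\<bar> = \<bar>a\<bar> * \<bar>u + v\<bar> / 2" by (simp add: abs_mult)
    also have "\<dots> \<le> \<bar>a\<bar> * (\<bar>u\<bar> + \<bar>v\<bar>) / 2"
      by (intro divide_right_mono mult_left_mono abs_triangle_ineq) auto
    also have "\<dots> \<le> \<bar>a\<bar> * (\<bar>u\<bar> + \<bar>v\<bar>)" by simp
    finally show ?thesis .
  qed
  also have "\<bar>b * \<bar>u - v\<bar>\<bar> \<le> \<bar>b\<bar> * (\<bar>u\<bar> + \<bar>v\<bar>)"
    by (simp add: abs_mult mult_left_mono abs_triangle_ineq4)
  finally have h: "\<bar>hk a b u v\<bar> \<le> (\<bar>a\<bar> + \<bar>b\<bar>) * (\<bar>u\<bar> + \<bar>v\<bar>)" by (simp add: algebra_simps)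
  have "(hk a b u v)\<^sup>2 = \<bar>hk a b u v\<bar>\<^sup>2" by simp
  also have "\<dots> \<le> ((\<bar>a\<bar> + \<bar>b\<bar>) * (\<bar>u\<bar> + \<bar>v\<bar>))\<^sup>2"
    using h by (intro power_mono) auto
  also have "\<dots> = (\<bar>a\<bar> + \<bar>b\<bar>)\<^sup>2 * (\<bar>u\<bar> + \<bar>v\<bar>)\<^sup>2" by (simp add: power_mult_distrib)
  also have "\<dots> \<le> (\<bar>a\<bar> + \<bar>b\<bar>)\<^sup>2 * (2 * (u\<^sup>2 + v\<^sup>2))"
  proof (intro mult_left_mono)
    have "(\<bar>u\<bar> + \<bar>v\<bar>)\<^sup>2 + (\<bar>u\<bar> - \<bar>v\<bar>)\<^sup>2 = 2 * (u\<^sup>2 + v\<^sup>2)" by (simp add: power2_eq_square algebra_simps)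
    then show "(\<bar>u\<bar> + \<bar>v\<bar>)\<^sup>2 \<le> 2 * (u\<^sup>2 + v\<^sup>2)" by (smt (verit) zero_le_power2)
  qed simp
  also have "\<dots> = 2 * (\<bar>a\<bar> + \<bar>b\<bar>)\<^sup>2 * (u\<^sup>2 + v\<^sup>2)" by (simp add: algebra_simps)
  finally show ?thesis .
qed

lemma hk_meas[measurable]: "(\<lambda>z. hk a b (fst z) (snd z)) \<in> borel_measurable (borel \<Otimes>\<^sub>M borel)"
  unfolding hk_def by measurable

lemma comp_Pb: "i < n \<Longrightarrow> (\<lambda>x. x i) \<in> borel_measurable (Pb n)"
  unfolding Pb_def by (rule measurable_component_singleton) simp

lemma hk_Pb: "i < n \<Longrightarrow> j < n \<Longrightarrow> (\<lambda>x. hk a b (x i) (x j)) \<in> borel_measurable (Pb n)"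
  using comp_Pb[of i n] comp_Pb[of j n] unfolding hk_def by measurable

context
  fixes M :: "real measure"
  assumes RD: "real_distribution M" and SQ: "integrable M (\<lambda>x. x\<^sup>2)"
begin

interpretation real_distribution M by (rule RD)

lemma int_M: "integrable M (\<lambda>x. x)"
  by (rule square_integrable_imp_integrable[OF measurable_ident_sets[OF events_eq_borel] SQ])

definition mu where "mu = (\<integral>x. x \<partial>M)"
definition m2 where "m2 = (\<integral>x. x\<^sup>2 \<partial>M)"
definition dl where "dl = (\<integral>z. \<bar>fst z - snd z\<bar> \<partial>(M \<Otimes>\<^sub>M M))"

lemma hk_P: "i < n \<Longrightarrow> j < n \<Longrightarrow> (\<lambda>x. hk a b (x i) (x j)) \<in> borel_measurable (P M n)"
  by (rule meas_P[OF RD hk_Pb])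

lemma hk_sq_int: assumes "i < n" "j < n"
  shows "integrable (P M n) (\<lambda>x. (hk a b (x i) (x j))\<^sup>2)"
proof -
  have i1: "integrable (P M n) (\<lambda>x. 2 * (\<bar>a\<bar> + \<bar>b\<bar>)\<^sup>2 * ((x i)\<^sup>2 + (x j)\<^sup>2))"
    using comp_integrable[OF RD assms(1) SQ] comp_integrable[OF RD assms(2) SQ] by auto
  have m: "(\<lambda>x. (hk a b (x i) (x j))\<^sup>2) \<in> borel_measurable (P M n)"
    using hk_P[OF assms] by measurable
  have ae: "AE x in P M n. norm ((hk a b (x i) (x j))\<^sup>2) \<le> norm (2 * (\<bar>a\<bar> + \<bar>b\<bar>)\<^sup>2 * ((x i)\<^sup>2 + (x j)\<^sup>2))"
    using hk_sq_le by auto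
  show ?thesis by (rule Bochner_Integration.integrable_bound[OF i1 m ae])
qed

lemma hk_int: assumes "i < n" "j < n"
  shows "integrable (P M n) (\<lambda>x. hk a b (x i) (x j))"
proof -
  interpret PP: prob_space "P M n" by (rule prob_P[OF RD])
  show ?thesis by (rule PP.square_integrable_imp_integrable[OF hk_P[OF assms] hk_sq_int[OF assms]])
qed

lemma pair_distr:
  assumes ij: "i < n" "j < n" "i \<noteq> j"
  shows "distr (P M n) (borel \<Otimes>\<^sub>M borel) (\<lambda>x. (x i, x j)) = M \<Otimes>\<^sub>M M"
proof -
  interpret PP: prob_space "P M n" by (rule prob_P[OF RD])
  have n: "0 < n" using ij by simp
  have ind: "PP.indep_var (PiM {i} (\<lambda>_. borel)) (\<lambda>x. restrict x {i}) (PiM {j} (\<lambda>_. borel)) (\<lambda>x. restrict x {j})"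
    using ij by (intro indep_blocks[OF RD _ _ _ n]) auto
  have "PP.indep_var borel ((\<lambda>y. y i) \<circ> (\<lambda>x. restrict x {i})) borel ((\<lambda>y. y j) \<circ> (\<lambda>x. restrict x {j}))"
    by (rule PP.indep_var_compose[OF ind]) (simp_all add: measurable_component_singleton)
  then have "PP.indep_var borel (\<lambda>x. x i) borel (\<lambda>x. x j)" by (simp add: o_def)
  then have "distr (P M n) borel (\<lambda>x. x i) \<Otimes>\<^sub>M distr (P M n) borel (\<lambda>x. x j) = distr (P M n) (borel \<Otimes>\<^sub>M borel) (\<lambda>x. (x i, x j))"
    unfolding PP.indep_var_distribution_eq by blast
  then show ?thesis using distr_comp_borel[OF RD ij(1)] distr_comp_borel[OF RD ij(2)] by simp
qed

lemma abs_diff_int: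
  assumes ij: "i < n" "j < n" "i \<noteq> j"
  shows "(\<integral>x. \<bar>x i - x j\<bar> \<partial>P M n) = dl"
proof -
  have m: "(\<lambda>x. (x i, x j)) \<in> measurable (P M n) (borel \<Otimes>\<^sub>M borel)"
    using comp_rv[OF RD ij(1)] comp_rv[OF RD ij(2)] by measurable
  have f: "(\<lambda>z::real\<times>real. \<bar>fst z - snd z\<bar>) \<in> borel_measurable (borel \<Otimes>\<^sub>M borel)" by measurable
  have "(\<integral>z. \<bar>fst z - snd z\<bar> \<partial>distr (P M n) (borel \<Otimes>\<^sub>M borel) (\<lambda>x. (x i, x j))) = (\<integral>x. \<bar>x i - x j\<bar> \<partial>P M n)"
    using integral_distr[OF m f] by simp
  then show ?thesis unfolding pair_distr[OF ij] dl_def by simp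
qed

lemma hk_expect:
  assumes ij: "i < n" "j < n" "i \<noteq> j"
  shows "(\<integral>x. hk a b (x i) (x j) \<partial>P M n) = a * mu + b * dl"
proof -
  have ii: "integrable (P M n) (\<lambda>x. x i)" "integrable (P M n) (\<lambda>x. x j)"
    using comp_integrable[OF RD _ int_M] ij by auto
  have ia: "integrable (P M n) (\<lambda>x. \<bar>x i - x j\<bar>)" using ii by auto
  have "(\<integral>x. hk a b (x i) (x j) \<partial>P M n) = a * ((\<integral>x. x i \<partial>P M n) + (\<integral>x. x j \<partial>P M n)) / 2 + b * (\<integral>x. \<bar>x i - x j\<bar> \<partial>P M n)"
    unfolding hk_def using ii ia by (simp add: integral_add integral_mult_right_zero)
  also have "\<dots> = a * mu + b * dl"
    using comp_integral[OF RD ij(1), of "\<lambda>x. x"] comp_integral[OF RD ij(2), of "\<lambda>x. x"] abs_diff_int[OF ij]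
    by (simp add: mu_def measurable_ident_sets[OF events_eq_borel])
  finally show ?thesis .
qed

end

lemma sq_diff_le: "((u::real) - v)\<^sup>2 \<le> 2 * u\<^sup>2 + 2 * v\<^sup>2"
proof -
  have "2 * u\<^sup>2 + 2 * v\<^sup>2 - (u - v)\<^sup>2 = (u + v)\<^sup>2" by (simp add: power2_eq_square algebra_simps)
  then show ?thesis using zero_le_power2[of "u + v"] by linarith
qed

lemma abs_mult_le_sq: "\<bar>(u::real) * v\<bar> \<le> (u\<^sup>2 + v\<^sup>2) / 2"
proof -
  define w where "w = \<bar>u * v\<bar>"
  have "u\<^sup>2 + v\<^sup>2 - 2 * w = (\<bar>u\<bar> - \<bar>v\<bar>)\<^sup>2" unfolding w_def by (simp add: power2_eq_square algebra_simps abs_mult)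
  then have "2 * w \<le> u\<^sup>2 + v\<^sup>2" using zero_le_power2[of "\<bar>u\<bar> - \<bar>v\<bar>"] by linarith
  then have "w \<le> (u\<^sup>2 + v\<^sup>2) / 2" by (simp add: field_simps)
  then show ?thesis unfolding w_def .
qed

lemma mult_le_sq: "(u::real) * v \<le> (u\<^sup>2 + v\<^sup>2) / 2"
  using abs_mult_le_sq[of u v] abs_ge_self[of "u * v"] by linarith

definition SP :: "nat \<Rightarrow> (nat \<times> nat) set" where
  "SP n = Sigma {..<n} (\<lambda>i. {..<n} - {i})"

lemma SP_finite[simp]: "finite (SP n)" unfolding SP_def by auto

lemma SP_card: "card (SP n) = n * (n - 1)"
proof -
  have "card (SP n) = (\<Sum>i<n. card ({..<n} - {i}))" unfolding SP_def by (simp add: card_SigmaI)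
  also have "\<dots> = (\<Sum>i<n. n - 1)" by (intro sum.cong) auto
  finally show ?thesis by simp
qed

lemma SP_mem: "p \<in> SP n \<longleftrightarrow> fst p < n \<and> snd p < n \<and> fst p \<noteq> snd p"
  unfolding SP_def by (cases p) auto

definition Ustat :: "real \<Rightarrow> real \<Rightarrow> nat \<Rightarrow> (nat \<Rightarrow> real) \<Rightarrow> real" where
  "Ustat a b n x = (\<Sum>p\<in>SP n. hk a b (x (fst p)) (x (snd p))) / real (n * (n - 1))"

definition ov :: "nat \<times> nat \<Rightarrow> nat \<times> nat \<Rightarrow> bool" where
  "ov p q \<longleftrightarrow> fst q = fst p \<or> fst q = snd p \<or> snd q = fst p \<or> snd q = snd p"

lemma ov_card: "card {q \<in> SP n. ov p q} \<le> 4 * n"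
proof -
  let ?A = "{fst p, snd p}"
  have sub: "{q \<in> SP n. ov p q} \<subseteq> (?A \<times> {..<n}) \<union> ({..<n} \<times> ?A)"
    by (auto simp: SP_mem ov_def)
  have "card {q \<in> SP n. ov p q} \<le> card ((?A \<times> {..<n}) \<union> ({..<n} \<times> ?A))"
    by (rule card_mono[OF _ sub]) auto
  also have "\<dots> \<le> card (?A \<times> {..<n}) + card ({..<n} \<times> ?A)" by (rule card_Un_le)
  also have "\<dots> = 2 * (card ?A * n)" by (simp add: card_cartesian_product)
  also have "\<dots> \<le> 2 * (2 * n)" using card_insert_le_m1[of 1 "{snd p}" "fst p"]
    by (intro mult_left_mono) (auto simp: card_insert_if)
  finally show ?thesis by simp
qed

context
  fixes M :: "real measure"
  assumes RD: "real_distribution M" and SQ: "integrable M (\<lambda>x. x\<^sup>2)"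
begin

interpretation real_distribution M by (rule RD)

definition th where "th a b = a * mu M + b * dl M"

definition Yp where "Yp a b p x = hk a b (x (fst p)) (x (snd p)) - th a b"

lemma m2_nonneg: "0 \<le> m2 M" unfolding m2_def[OF RD SQ] by simp

lemma Yp_meas: "p \<in> SP n \<Longrightarrow> Yp a b p \<in> borel_measurable (P M n)"
  unfolding Yp_def using hk_P[OF RD SQ, of "fst p" n "snd p" a b] by (simp add: SP_mem)

lemma Yp_int: "p \<in> SP n \<Longrightarrow> integrable (P M n) (Yp a b p)"
proof -
  assume p: "p \<in> SP n"
  interpret PP: prob_space "P M n" by (rule prob_P[OF RD])
  show ?thesis
    unfolding Yp_def using hk_int[OF RD SQ, of "fst p" n "snd p" a b] p by (simp add: SP_mem)
qed

lemma Yp_mean: "p \<in> SP n \<Longrightarrow> (\<integral>x. Yp a b p x \<partial>P M n) = 0"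
proof -
  assume p: "p \<in> SP n"
  interpret PP: prob_space "P M n" by (rule prob_P[OF RD])
  show ?thesis
    unfolding Yp_def using hk_int[OF RD SQ, of "fst p" n "snd p" a b] p
      hk_expect[OF RD SQ, of "fst p" n "snd p" a b]
    by (simp add: SP_mem th_def PP.prob_space)
qed

definition DD where "DD a b = 8 * (\<bar>a\<bar> + \<bar>b\<bar>)\<^sup>2 * m2 M + 2 * (th a b)\<^sup>2"

lemma Yp_sq_int: "p \<in> SP n \<Longrightarrow> integrable (P M n) (\<lambda>x. (Yp a b p x)\<^sup>2)"
proof -
  assume p: "p \<in> SP n"
  interpret PP: prob_space "P M n" by (rule prob_P[OF RD])
  have i1: "integrable (P M n) (\<lambda>x. 2 * (hk a b (x (fst p)) (x (snd p)))\<^sup>2 + 2 * (th a b)\<^sup>2)"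
    using hk_sq_int[OF RD SQ, of "fst p" n "snd p" a b] p by (simp add: SP_mem)
  have m: "(\<lambda>x. (Yp a b p x)\<^sup>2) \<in> borel_measurable (P M n)" using Yp_meas[OF p] by measurable
  have ae: "AE x in P M n. norm ((Yp a b p x)\<^sup>2) \<le> norm (2 * (hk a b (x (fst p)) (x (snd p)))\<^sup>2 + 2 * (th a b)\<^sup>2)"
  proof (intro AE_I2)
    fix x
    have "(Yp a b p x)\<^sup>2 \<le> 2 * (hk a b (x (fst p)) (x (snd p)))\<^sup>2 + 2 * (th a b)\<^sup>2"
      unfolding Yp_def by (rule sq_diff_le)
    then show "norm ((Yp a b p x)\<^sup>2) \<le> norm (2 * (hk a b (x (fst p)) (x (snd p)))\<^sup>2 + 2 * (th a b)\<^sup>2)"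
      by simp
  qed
  show ?thesis by (rule Bochner_Integration.integrable_bound[OF i1 m ae])
qed

lemma Yp_prod_int: assumes p: "p \<in> SP n" and q: "q \<in> SP n"
  shows "integrable (P M n) (\<lambda>x. Yp a b p x * Yp a b q x)"
proof -
  have i1: "integrable (P M n) (\<lambda>x. (Yp a b p x)\<^sup>2 + (Yp a b q x)\<^sup>2)"
    using Yp_sq_int[OF p] Yp_sq_int[OF q] by simp
  have m: "(\<lambda>x. Yp a b p x * Yp a b q x) \<in> borel_measurable (P M n)"
    using Yp_meas[OF p] Yp_meas[OF q] by measurable
  have ae: "AE x in P M n. norm (Yp a b p x * Yp a b q x) \<le> norm ((Yp a b p x)\<^sup>2 + (Yp a b q x)\<^sup>2)"
  proof (intro AE_I2)
    fix x show "norm (Yp a b p x * Yp a b q x) \<le> norm ((Yp a b p x)\<^sup>2 + (Yp a b q x)\<^sup>2)"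
      using abs_mult_le_sq[of "Yp a b p x" "Yp a b q x"] by simp
  qed
  show ?thesis by (rule Bochner_Integration.integrable_bound[OF i1 m ae])
qed

lemma Yp_sq_bound: assumes p: "p \<in> SP n"
  shows "(\<integral>x. (Yp a b p x)\<^sup>2 \<partial>P M n) \<le> DD a b"
proof -
  interpret PP: prob_space "P M n" by (rule prob_P[OF RD])
  let ?i = "fst p" and ?j = "snd p"
  have ij: "?i < n" "?j < n" using p by (auto simp: SP_mem)
  have ih: "integrable (P M n) (\<lambda>x. (hk a b (x ?i) (x ?j))\<^sup>2)" by (rule hk_sq_int[OF RD SQ ij])
  have ic: "integrable (P M n) (\<lambda>x. (x ?i)\<^sup>2)" "integrable (P M n) (\<lambda>x. (x ?j)\<^sup>2)"
    using comp_integrable[OF RD _ SQ] ij by auto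
  have "(\<integral>x. (Yp a b p x)\<^sup>2 \<partial>P M n) \<le> (\<integral>x. 2 * (hk a b (x ?i) (x ?j))\<^sup>2 + 2 * (th a b)\<^sup>2 \<partial>P M n)"
    using Yp_sq_int[OF p] ih unfolding Yp_def by (intro integral_mono) (auto intro: sq_diff_le)
  also have "\<dots> = 2 * (\<integral>x. (hk a b (x ?i) (x ?j))\<^sup>2 \<partial>P M n) + 2 * (th a b)\<^sup>2"
    using ih by (simp add: PP.prob_space)
  also have "(\<integral>x. (hk a b (x ?i) (x ?j))\<^sup>2 \<partial>P M n) \<le> (\<integral>x. 2 * (\<bar>a\<bar> + \<bar>b\<bar>)\<^sup>2 * ((x ?i)\<^sup>2 + (x ?j)\<^sup>2) \<partial>P M n)"
    using ih ic by (intro integral_mono) (auto intro: hk_sq_le)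
  also have "\<dots> = 2 * (\<bar>a\<bar> + \<bar>b\<bar>)\<^sup>2 * ((\<integral>x. (x ?i)\<^sup>2 \<partial>P M n) + (\<integral>x. (x ?j)\<^sup>2 \<partial>P M n))"
    using ic by simp
  also have "(\<integral>x. (x ?i)\<^sup>2 \<partial>P M n) = m2 M"
    using comp_integral[OF RD ij(1), of "\<lambda>x. x\<^sup>2"] borel_measurable_integrable[OF SQ] by (simp add: m2_def[OF RD SQ])
  also have "(\<integral>x. (x ?j)\<^sup>2 \<partial>P M n) = m2 M"
    using comp_integral[OF RD ij(2), of "\<lambda>x. x\<^sup>2"] borel_measurable_integrable[OF SQ] by (simp add: m2_def[OF RD SQ])
  finally show ?thesis unfolding DD_def by simp
qed

lemma Yp_cov_bound: assumes p: "p \<in> SP n" and q: "q \<in> SP n"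
  shows "(\<integral>x. Yp a b p x * Yp a b q x \<partial>P M n) \<le> DD a b"
proof -
  have "(\<integral>x. Yp a b p x * Yp a b q x \<partial>P M n) \<le> (\<integral>x. ((Yp a b p x)\<^sup>2 + (Yp a b q x)\<^sup>2) / 2 \<partial>P M n)"
  proof (rule integral_mono[OF Yp_prod_int[OF p q]])
    show "integrable (P M n) (\<lambda>x. ((Yp a b p x)\<^sup>2 + (Yp a b q x)\<^sup>2) / 2)"
      using Yp_sq_int[OF p] Yp_sq_int[OF q] by simp
    fix x show "Yp a b p x * Yp a b q x \<le> ((Yp a b p x)\<^sup>2 + (Yp a b q x)\<^sup>2) / 2" by (rule mult_le_sq)
  qed
  also have "\<dots> = ((\<integral>x. (Yp a b p x)\<^sup>2 \<partial>P M n) + (\<integral>x. (Yp a b q x)\<^sup>2 \<partial>P M n)) / 2"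
    using Yp_sq_int[OF p] Yp_sq_int[OF q] by simp
  also have "\<dots> \<le> DD a b" using Yp_sq_bound[OF p, where a=a and b=b] Yp_sq_bound[OF q, where a=a and b=b] by simp
  finally show ?thesis .
qed

lemma Yp_cov_zero: assumes p: "p \<in> SP n" and q: "q \<in> SP n" and nov: "\<not> ov p q"
  shows "(\<integral>x. Yp a b p x * Yp a b q x \<partial>P M n) = 0"
proof -
  let ?A = "{fst p, snd p}" and ?B = "{fst q, snd q}"
  have A: "?A \<subseteq> {..<n}" and B: "?B \<subseteq> {..<n}" using p q by (auto simp: SP_mem)
  have AB: "?A \<inter> ?B = {}" using nov by (auto simp: ov_def)
  have n: "0 < n" using p by (auto simp: SP_mem)
  have c1: "(\<lambda>y. y (fst p)) \<in> borel_measurable (PiM ?A (\<lambda>_. borel))"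
    "(\<lambda>y. y (snd p)) \<in> borel_measurable (PiM ?A (\<lambda>_. borel))"
    by (rule measurable_component_singleton, simp)+
  have c2: "(\<lambda>y. y (fst q)) \<in> borel_measurable (PiM ?B (\<lambda>_. borel))"
    "(\<lambda>y. y (snd q)) \<in> borel_measurable (PiM ?B (\<lambda>_. borel))"
    by (rule measurable_component_singleton, simp)+
  have f: "(\<lambda>y. hk a b (y (fst p)) (y (snd p)) - th a b) \<in> borel_measurable (PiM ?A (\<lambda>_. borel))"
    using c1 unfolding hk_def by measurable
  have g: "(\<lambda>y. hk a b (y (fst q)) (y (snd q)) - th a b) \<in> borel_measurable (PiM ?B (\<lambda>_. borel))"
    using c2 unfolding hk_def by measurable
  have e1: "\<And>x. (\<lambda>y. hk a b (y (fst p)) (y (snd p)) - th a b) (restrict x ?A) = Yp a b p x"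
    by (simp add: Yp_def)
  have e2: "\<And>x. (\<lambda>y. hk a b (y (fst q)) (y (snd q)) - th a b) (restrict x ?B) = Yp a b q x"
    by (simp add: Yp_def)
  have "(\<integral>x. Yp a b p x * Yp a b q x \<partial>P M n) = (\<integral>x. Yp a b p x \<partial>P M n) * (\<integral>x. Yp a b q x \<partial>P M n)"
    using indep_prod_integral[OF RD A B AB n f g] Yp_int[OF p] Yp_int[OF q] unfolding e1 e2 by simp
  then show ?thesis using Yp_mean[OF p] by simp
qed

end

context
  fixes M :: "real measure"
  assumes RD: "real_distribution M" and SQ: "integrable M (\<lambda>x. x\<^sup>2)"
begin

interpretation real_distribution M by (rule RD)

lemma div_shift: "(N::real) > 0 \<Longrightarrow> S = H - N * t \<Longrightarrow> H / N = t + S / N"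
  by (simp add: field_simps)

lemma N_pos: "2 \<le> n \<Longrightarrow> 0 < real (n * (n - 1))" by simp

lemma U_decomp: assumes n: "2 \<le> n"
  shows "Ustat a b n x = th M a b + (\<Sum>p\<in>SP n. Yp M a b p x) / real (n * (n - 1))"
proof -
  have "(\<Sum>p\<in>SP n. Yp M a b p x) = (\<Sum>p\<in>SP n. hk a b (x (fst p)) (x (snd p))) - real (n * (n - 1)) * th M a b"
    unfolding Yp_def[OF RD SQ] by (simp add: sum_subtractf SP_card)
  then show ?thesis unfolding Ustat_def by (rule div_shift[OF N_pos[OF n]])
qed

lemma U_meas: "Ustat a b n \<in> borel_measurable (P M n)"
proof -
  have "\<And>p. p \<in> SP n \<Longrightarrow> (\<lambda>x. hk a b (x (fst p)) (x (snd p))) \<in> borel_measurable (P M n)"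
    using hk_P[OF RD SQ] by (auto simp: SP_mem)
  then show ?thesis unfolding Ustat_def by (intro borel_measurable_divide borel_measurable_sum) auto
qed

lemma U_int: "integrable (P M n) (Ustat a b n)"
proof -
  have "\<And>p. p \<in> SP n \<Longrightarrow> integrable (P M n) (\<lambda>x. hk a b (x (fst p)) (x (snd p)))"
    using hk_int[OF RD SQ] by (auto simp: SP_mem)
  then show ?thesis unfolding Ustat_def by (intro integrable_divide integrable_sum) auto
qed

lemma U_mean: assumes n: "2 \<le> n" shows "(\<integral>x. Ustat a b n x \<partial>P M n) = th M a b"
proof -
  interpret PP: prob_space "P M n" by (rule prob_P[OF RD])
  have "(\<integral>x. Ustat a b n x \<partial>P M n) = (\<integral>x. th M a b + (\<Sum>p\<in>SP n. Yp M a b p x) / real (n * (n - 1)) \<partial>P M n)"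
    using U_decomp[OF n] by simp
  also have "\<dots> = th M a b + (\<Sum>p\<in>SP n. (\<integral>x. Yp M a b p x \<partial>P M n)) / real (n * (n - 1))"
    using Yp_int[OF RD SQ] by (simp add: integral_sum integrable_sum PP.prob_space)
  also have "\<dots> = th M a b" using Yp_mean[OF RD SQ] by simp
  finally show ?thesis .
qed

lemma DD_nonneg: "0 \<le> DD M a b"
  unfolding DD_def[OF RD SQ] using m2_nonneg[OF RD SQ] by simp

lemma U_var: assumes n: "2 \<le> n" shows "var_of (P M n) (Ustat a b n) \<le> 8 * DD M a b / real n"
proof -
  interpret PP: prob_space "P M n" by (rule prob_P[OF RD])
  let ?N = "real (n * (n - 1))"
  let ?Y = "\<lambda>p x. Yp M a b p x"
  have Npos: "0 < ?N" using N_pos[OF n] .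
  have "var_of (P M n) (Ustat a b n) = (\<integral>x. ((\<Sum>p\<in>SP n. ?Y p x) / ?N)\<^sup>2 \<partial>P M n)"
    unfolding var_of_def U_mean[OF n] using U_decomp[OF n] by simp
  also have "\<dots> = (\<integral>x. (\<Sum>p\<in>SP n. \<Sum>q\<in>SP n. ?Y p x * ?Y q x) \<partial>P M n) / ?N\<^sup>2"
    by (simp add: power_divide power2_eq_square sum_product)
  also have "(\<integral>x. (\<Sum>p\<in>SP n. \<Sum>q\<in>SP n. ?Y p x * ?Y q x) \<partial>P M n) =
      (\<Sum>p\<in>SP n. \<Sum>q\<in>SP n. (\<integral>x. ?Y p x * ?Y q x \<partial>P M n))"
    using Yp_prod_int[OF RD SQ] by (simp add: integral_sum integrable_sum)
  also have "\<dots> \<le> (\<Sum>p\<in>SP n. DD M a b * real (4 * n))"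
  proof (rule sum_mono)
    fix p assume p: "p \<in> SP n"
    have "(\<Sum>q\<in>SP n. (\<integral>x. ?Y p x * ?Y q x \<partial>P M n)) \<le> (\<Sum>q\<in>SP n. if ov p q then DD M a b else 0)"
    proof (rule sum_mono)
      fix q assume q: "q \<in> SP n"
      show "(\<integral>x. ?Y p x * ?Y q x \<partial>P M n) \<le> (if ov p q then DD M a b else 0)"
        using Yp_cov_bound[OF RD SQ p q] Yp_cov_zero[OF RD SQ p q] by auto
    qed
    also have "\<dots> = DD M a b * real (card {q \<in> SP n. ov p q})"
      by (simp add: sum.If_cases Int_def)
    also have "\<dots> \<le> DD M a b * real (4 * n)"
      using ov_card[of n p] DD_nonneg by (intro mult_left_mono) auto
    finally show "(\<Sum>q\<in>SP n. (\<integral>x. ?Y p x * ?Y q x \<partial>P M n)) \<le> DD M a b * real (4 * n)" .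
  qed
  also have "\<dots> = ?N * (DD M a b * real (4 * n))" by (simp add: SP_card)
  finally have "var_of (P M n) (Ustat a b n) \<le> ?N * (DD M a b * real (4 * n)) / ?N\<^sup>2"
    using Npos by (simp add: divide_right_mono)
  also have "\<dots> = 4 * DD M a b * real n / ?N" using Npos by (simp add: power2_eq_square)
  also have "\<dots> = 4 * DD M a b / real (n - 1)" using n by (simp add: field_simps)
  also have "\<dots> \<le> 8 * DD M a b / real n"
  proof -
    have "real n \<le> 2 * real (n - 1)" using n by simp
    then have "real n * DD M a b \<le> (2 * real (n - 1)) * DD M a b"
      using DD_nonneg[of a b] by (rule mult_right_mono)
    then have "4 * DD M a b * real n \<le> 8 * DD M a b * real (n - 1)" by (simp add: algebra_simps)
    then show ?thesis using n by (simp add: field_simps)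
  qed
  finally show ?thesis .
qed

end

definition sg :: "nat \<Rightarrow> nat \<Rightarrow> real" where
  "sg i j = (if j < i then 1 else if i < j then -1 else 0)"

definition sgs :: "nat \<Rightarrow> nat \<Rightarrow> real" where
  "sgs n i = (\<Sum>j<n. sg i j)"

definition ccoef :: "real \<Rightarrow> real \<Rightarrow> nat \<Rightarrow> nat \<Rightarrow> real" where
  "ccoef a b n i = a / real n + b * 2 * sgs n i / real (n * (n - 1))"

lemma sg_anti: "sg i j = - sg j i" unfolding sg_def by auto

lemma sgs_sum: "(\<Sum>i<n. sgs n i) = 0"
proof -
  have "(\<Sum>i<n. sgs n i) = (\<Sum>i<n. \<Sum>j<n. sg i j)" unfolding sgs_def ..
  also have "\<dots> = (\<Sum>j<n. \<Sum>i<n. sg i j)" by (rule sum.swap)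
  also have "\<dots> = (\<Sum>j<n. \<Sum>i<n. - sg j i)" by (intro sum.cong refl) (rule sg_anti)
  also have "\<dots> = - (\<Sum>j<n. \<Sum>i<n. sg j i)" by (simp add: sum_negf)
  also have "(\<Sum>j<n. \<Sum>i<n. sg j i) = (\<Sum>i<n. sgs n i)" unfolding sgs_def ..
  finally show ?thesis by simp
qed

lemma ccoef_sum: "2 \<le> n \<Longrightarrow> (\<Sum>i<n. ccoef a b n i) = a"
proof -
  assume n: "2 \<le> n"
  have "(\<Sum>i<n. ccoef a b n i) = (\<Sum>i<n. a / real n) + b * 2 * (\<Sum>i<n. sgs n i) / real (n * (n - 1))"
    unfolding ccoef_def by (simp add: sum.distrib sum_distrib_left sum_divide_distrib)
  then show ?thesis using n by (simp add: sgs_sum)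
qed

lemma abs_sorted: "i < n \<Longrightarrow> j < n \<Longrightarrow> \<bar>ord_stat n x i - ord_stat n x j\<bar> = sg i j * (ord_stat n x i - ord_stat n x j)"
proof -
  assume ij: "i < n" "j < n"
  show ?thesis
  proof (cases "j < i")
    case True then show ?thesis using ord_mono[of j i n x] ij by (simp add: sg_def)
  next
    case False
    then show ?thesis using ord_mono[of i j n x] ij by (cases "i < j") (auto simp: sg_def)
  qed
qed

lemma gini_identity: "(\<Sum>i<n. \<Sum>j<n. \<bar>x i - x j\<bar>) = 2 * (\<Sum>i<n. sgs n i * ord_stat n x i)"
proof -
  let ?s = "ord_stat n x"
  have "(\<Sum>i<n. \<Sum>j<n. \<bar>x i - x j\<bar>) = (\<Sum>i<n. \<Sum>j<n. \<bar>x i - ?s j\<bar>)"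
  proof (rule sum.cong[OF refl])
    fix i show "(\<Sum>j<n. \<bar>x i - x j\<bar>) = (\<Sum>j<n. \<bar>x i - ?s j\<bar>)"
      using sum_ord_stat[where g="\<lambda>v. \<bar>x i - v\<bar>" and n=n and x=x] by simp
  qed
  also have "\<dots> = (\<Sum>i<n. \<Sum>j<n. \<bar>?s i - ?s j\<bar>)"
    using sum_ord_stat[where g="\<lambda>u. \<Sum>j<n. \<bar>u - ?s j\<bar>" and n=n and x=x] by simp
  also have "\<dots> = (\<Sum>i<n. \<Sum>j<n. sg i j * (?s i - ?s j))"
    by (intro sum.cong refl) (simp add: abs_sorted)
  also have "\<dots> = (\<Sum>i<n. \<Sum>j<n. sg i j * ?s i) - (\<Sum>i<n. \<Sum>j<n. sg i j * ?s j)"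
    by (simp add: right_diff_distrib sum_subtractf)
  also have "(\<Sum>i<n. \<Sum>j<n. sg i j * ?s j) = (\<Sum>j<n. \<Sum>i<n. sg i j * ?s j)" by (rule sum.swap)
  also have "\<dots> = (\<Sum>j<n. \<Sum>i<n. - (sg j i * ?s j))" by (intro sum.cong refl) (subst sg_anti, simp)
  also have "\<dots> = - (\<Sum>j<n. \<Sum>i<n. sg j i * ?s j)" by (simp add: sum_negf)
  also have "(\<Sum>i<n. \<Sum>j<n. sg i j * ?s i) = (\<Sum>i<n. sgs n i * ?s i)"
    unfolding sgs_def by (simp add: sum_distrib_right)
  finally show ?thesis by simp
qed

lemma sum_SP: "(\<Sum>p\<in>SP n. (f::nat\<Rightarrow>nat\<Rightarrow>real) (fst p) (snd p)) = (\<Sum>i<n. \<Sum>j<n. f i j) - (\<Sum>i<n. f i i)"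
proof -
  have "(\<Sum>p\<in>SP n. f (fst p) (snd p)) = (\<Sum>i<n. \<Sum>j\<in>{..<n} - {i}. f i j)"
    unfolding SP_def by (simp add: sum.Sigma split_def)
  also have "\<dots> = (\<Sum>i<n. (\<Sum>j<n. f i j) - f i i)"
    by (intro sum.cong refl) (simp add: sum_diff1)
  finally show ?thesis by (simp add: sum_subtractf)
qed

lemma Ustat_lin: assumes n: "2 \<le> n" shows "Ustat a b n x = lin_est n (ccoef a b n) x"
proof -
  let ?s = "ord_stat n x"
  let ?N = "real (n * (n - 1))"
  have N: "0 < ?N" using n by simp
  have sx: "(\<Sum>i<n. x i) = (\<Sum>i<n. ?s i)" using sum_ord_stat[where g="\<lambda>v. v"] by simp
  have "(\<Sum>p\<in>SP n. hk a b (x (fst p)) (x (snd p))) =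
      (\<Sum>i<n. \<Sum>j<n. hk a b (x i) (x j)) - (\<Sum>i<n. hk a b (x i) (x i))"
    by (rule sum_SP)
  also have "(\<Sum>i<n. \<Sum>j<n. hk a b (x i) (x j)) = (\<Sum>i<n. \<Sum>j<n. a / 2 * x i + (a / 2 * x j + b * \<bar>x i - x j\<bar>))"
    unfolding hk_def by (intro sum.cong refl) (simp add: field_simps)
  also have "\<dots> = (\<Sum>i<n. \<Sum>j<n. a / 2 * x i) + ((\<Sum>i<n. \<Sum>j<n. a / 2 * x j) + b * (\<Sum>i<n. \<Sum>j<n. \<bar>x i - x j\<bar>))"
    by (simp only: sum.distrib sum_distrib_left)
  also have "(\<Sum>i<n. \<Sum>j<n. a / 2 * x i) = a / 2 * real n * (\<Sum>i<n. x i)"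
    apply (simp add: sum_distrib_left) apply (rule sum.cong) apply (simp_all add: algebra_simps) done
  also have "(\<Sum>i<n. \<Sum>j<n. a / 2 * x j) = a / 2 * real n * (\<Sum>i<n. x i)"
    apply (simp add: sum_distrib_left) apply (rule sum.cong) apply (simp_all add: algebra_simps) done
  also have "(\<Sum>i<n. hk a b (x i) (x i)) = a * (\<Sum>i<n. x i)"
    unfolding hk_def by (simp add: sum_distrib_left)
  also note gini_identity
  finally have "(\<Sum>p\<in>SP n. hk a b (x (fst p)) (x (snd p))) =
      a * (real n - 1) * (\<Sum>i<n. ?s i) + 2 * b * (\<Sum>i<n. sgs n i * ?s i)"
    unfolding sx by (simp add: algebra_simps)
  then have "Ustat a b n x = (a * (real n - 1) * (\<Sum>i<n. ?s i) + 2 * b * (\<Sum>i<n. sgs n i * ?s i)) / ?N"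
    unfolding Ustat_def by simp
  also have "\<dots> = a / real n * (\<Sum>i<n. ?s i) + 2 * b / ?N * (\<Sum>i<n. sgs n i * ?s i)"
  proof -
    have rn: "real n > 1" using n by simp
    have "?N = real n * (real n - 1)" using n by (simp add: of_nat_diff)
    then show ?thesis using rn by (simp add: field_simps)
  qed
  also have "\<dots> = (\<Sum>i<n. ccoef a b n i * ?s i)"
  proof -
    have "(\<Sum>i<n. ccoef a b n i * ?s i) = (\<Sum>i<n. a / real n * ?s i + 2 * b / ?N * (sgs n i * ?s i))"
      unfolding ccoef_def by (intro sum.cong refl) (simp add: field_simps)
    also have "\<dots> = a / real n * (\<Sum>i<n. ?s i) + 2 * b / ?N * (\<Sum>i<n. sgs n i * ?s i)"
      by (simp only: sum.distrib sum_distrib_left)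
    finally show ?thesis by simp
  qed
  finally show ?thesis unfolding lin_est_def .
qed

context
  fixes M :: "real measure"
  assumes RD: "real_distribution M" and SQ: "integrable M (\<lambda>x. x\<^sup>2)"
begin

interpretation real_distribution M by (rule RD)

lemma var_M: "var_of M (\<lambda>x. x) = m2 M - (mu M)\<^sup>2"
proof -
  have i: "integrable M (\<lambda>x. x)" by (rule int_M[OF RD SQ])
  have "var_of M (\<lambda>x. x) = (\<integral>x. x\<^sup>2 - 2 * mu M * x + (mu M)\<^sup>2 \<partial>M)"
    unfolding var_of_def mu_def[OF RD SQ, symmetric] by (intro Bochner_Integration.integral_cong refl) (simp add: power2_diff)
  also have "\<dots> = m2 M - 2 * mu M * mu M + (mu M)\<^sup>2"
    using i SQ by (simp add: m2_def[OF RD SQ] mu_def[OF RD SQ] prob_space[unfolded space_eq_univ])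
  finally show ?thesis by (simp add: power2_eq_square)
qed

lemma sq_diff_P2: "(\<integral>x. (x 0 - x 1)\<^sup>2 \<partial>P M 2) = 2 * (m2 M - (mu M)\<^sup>2)"
proof -
  interpret PP: prob_space "P M 2" by (rule prob_P[OF RD])
  have i0: "integrable (P M 2) (\<lambda>x. x 0)" "integrable (P M 2) (\<lambda>x. x 1)"
    using comp_integrable[OF RD _ int_M[OF RD SQ]] by auto
  have s0: "integrable (P M 2) (\<lambda>x. (x 0)\<^sup>2)" "integrable (P M 2) (\<lambda>x. (x 1)\<^sup>2)"
    using comp_integrable[OF RD _ SQ] by auto
  have idm: "(\<lambda>x::real. x) \<in> borel_measurable M" by (rule measurable_ident_sets[OF events_eq_borel])
  have sqm: "(\<lambda>x::real. x\<^sup>2) \<in> borel_measurable M" using borel_measurable_integrable[OF SQ] .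
  have e0: "(\<integral>x. x 0 \<partial>P M 2) = mu M" "(\<integral>x. x 1 \<partial>P M 2) = mu M"
    using comp_integral[OF RD _ idm] by (auto simp: mu_def[OF RD SQ])
  have q0: "(\<integral>x. (x 0)\<^sup>2 \<partial>P M 2) = m2 M" "(\<integral>x. (x 1)\<^sup>2 \<partial>P M 2) = m2 M"
    using comp_integral[OF RD _ sqm] by (auto simp: m2_def[OF RD SQ])
  have f0: "(\<lambda>y. y 0) \<in> borel_measurable (PiM {0::nat} (\<lambda>_. borel))" by (rule measurable_component_singleton) simp
  have f1: "(\<lambda>y. y 1) \<in> borel_measurable (PiM {1::nat} (\<lambda>_. borel))" by (rule measurable_component_singleton) simp
  have prod: "(\<integral>x. x 0 * x 1 \<partial>P M 2) = mu M * mu M"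
    using indep_prod_integral[OF RD, of "{0}" 2 "{1}" "\<lambda>y. y 0" "\<lambda>y. y 1"] f0 f1 i0 e0 by simp
  have ip: "integrable (P M 2) (\<lambda>x. x 0 * x 1)"
  proof -
    have "PP.indep_var borel ((\<lambda>y. y 0) \<circ> (\<lambda>x. restrict x {0::nat})) borel ((\<lambda>y. y 1) \<circ> (\<lambda>x. restrict x {1}))"
      by (rule PP.indep_var_compose[OF indep_blocks[OF RD] f0 f1]) auto
    then have "PP.indep_var borel (\<lambda>x. x 0) borel (\<lambda>x. x 1)" by (simp add: o_def)
    from PP.indep_var_integrable[OF this i0] show ?thesis .
  qed
  have "(\<integral>x. (x 0 - x 1)\<^sup>2 \<partial>P M 2) = (\<integral>x. (x 0)\<^sup>2 - 2 * (x 0 * x 1) + (x 1)\<^sup>2 \<partial>P M 2)"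
    by (intro Bochner_Integration.integral_cong refl) (simp add: power2_diff)
  also have "\<dots> = m2 M - 2 * (mu M * mu M) + m2 M"
    using s0 ip q0 prod by simp
  finally show ?thesis by (simp add: power2_eq_square)
qed

lemma dl_pos: assumes V: "var_of M (\<lambda>x. x) > 0" shows "dl M > 0"
proof -
  interpret PP: prob_space "P M 2" by (rule prob_P[OF RD])
  have d: "(\<integral>x. \<bar>x 0 - x 1\<bar> \<partial>P M 2) = dl M" using abs_diff_int[OF RD SQ, of 0 2 1] by simp
  have i0: "integrable (P M 2) (\<lambda>x. x 0)" "integrable (P M 2) (\<lambda>x. x 1)"
    using comp_integrable[OF RD _ int_M[OF RD SQ]] by auto
  have ia: "integrable (P M 2) (\<lambda>x. \<bar>x 0 - x 1\<bar>)" using i0 by auto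
  have nn: "dl M \<ge> 0" using d Bochner_Integration.integral_nonneg[where M="P M 2" and f="\<lambda>x. \<bar>x 0 - x 1\<bar>"] by simp
  show ?thesis
  proof (rule ccontr)
    assume "\<not> dl M > 0"
    then have "dl M = 0" using nn by simp
    then have "AE x in P M 2. \<bar>x 0 - x 1\<bar> = 0"
      using integral_nonneg_eq_0_iff_AE[OF ia] d by simp
    then have "AE x in P M 2. (x 0 - x 1)\<^sup>2 = 0" by eventually_elim simp
    moreover have "(\<lambda>x. (x 0 - x 1)\<^sup>2) \<in> borel_measurable (P M 2)"
      using comp_rv[OF RD, of 0 2] comp_rv[OF RD, of 1 2] by measurable
    ultimately have "(\<integral>x. (x 0 - x 1)\<^sup>2 \<partial>P M 2) = (\<integral>x. 0 \<partial>P M 2)"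
      by (intro integral_cong_AE) simp_all
    then have "m2 M - (mu M)\<^sup>2 = 0" using sq_diff_P2 by simp
    then show False using V var_M by simp
  qed
qed

end

definition L2 :: "'a measure \<Rightarrow> ('a \<Rightarrow> real) \<Rightarrow> bool" where
  "L2 N f \<longleftrightarrow> f \<in> borel_measurable N \<and> integrable N (\<lambda>x. (f x)\<^sup>2)"

lemma L2_add: assumes "L2 N f" "L2 N g" shows "L2 N (\<lambda>x. f x + g x)"
proof -
  have m: "(\<lambda>x. f x + g x) \<in> borel_measurable N" "(\<lambda>x. (f x + g x)\<^sup>2) \<in> borel_measurable N"
    using assms unfolding L2_def by auto
  have i1: "integrable N (\<lambda>x. 2 * (f x)\<^sup>2 + 2 * (g x)\<^sup>2)" using assms unfolding L2_def by auto
  have ae: "AE x in N. norm ((f x + g x)\<^sup>2) \<le> norm (2 * (f x)\<^sup>2 + 2 * (g x)\<^sup>2)"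
  proof (intro AE_I2)
    fix x
    have "(f x + g x)\<^sup>2 \<le> 2 * (f x)\<^sup>2 + 2 * (g x)\<^sup>2" using sq_diff_le[of "f x" "- g x"] by simp
    then show "norm ((f x + g x)\<^sup>2) \<le> norm (2 * (f x)\<^sup>2 + 2 * (g x)\<^sup>2)" by simp
  qed
  show ?thesis unfolding L2_def using m Bochner_Integration.integrable_bound[OF i1 m(2) ae] by auto
qed

lemma L2_scale: assumes "L2 N f" shows "L2 N (\<lambda>x. c * f x)"
  using assms unfolding L2_def by (auto simp: power_mult_distrib)

lemma L2_zero: "L2 N (\<lambda>x. 0)" unfolding L2_def by simp

lemma L2_sum: assumes "finite I" "\<And>i. i \<in> I \<Longrightarrow> L2 N (f i)" shows "L2 N (\<lambda>x. \<Sum>i\<in>I. f i x)"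
  using assms by (induction I rule: finite_induct) (auto intro: L2_add L2_zero)

lemma L2_cong: "L2 N f \<Longrightarrow> (\<And>x. f x = g x) \<Longrightarrow> L2 N g"
proof -
  assume "L2 N f" "\<And>x. f x = g x"
  then have "f = g" by auto
  with \<open>L2 N f\<close> show ?thesis by simp
qed

lemma L2_mult_int: assumes "L2 N f" "L2 N g" shows "integrable N (\<lambda>x. f x * g x)"
proof -
  have m: "(\<lambda>x. f x * g x) \<in> borel_measurable N" using assms unfolding L2_def by auto
  have i1: "integrable N (\<lambda>x. (f x)\<^sup>2 + (g x)\<^sup>2)" using assms unfolding L2_def by auto
  have ae: "AE x in N. norm (f x * g x) \<le> norm ((f x)\<^sup>2 + (g x)\<^sup>2)"
  proof (intro AE_I2)
    fix x show "norm (f x * g x) \<le> norm ((f x)\<^sup>2 + (g x)\<^sup>2)"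
      using abs_mult_le_sq[of "f x" "g x"] by simp
  qed
  show ?thesis by (rule Bochner_Integration.integrable_bound[OF i1 m ae])
qed

lemma L2_const: "finite_measure N \<Longrightarrow> L2 N (\<lambda>x. c)"
  unfolding L2_def by (simp add: finite_measure.integrable_const)

lemma L2_int: "finite_measure N \<Longrightarrow> L2 N f \<Longrightarrow> integrable N f"
  unfolding L2_def using finite_measure.square_integrable_imp_integrable by blast

lemma expand_sq: assumes X: "L2 N X" and Y: "L2 N Y"
  shows "(\<integral>x. (X x + t * Y x)\<^sup>2 \<partial>N) = (\<integral>x. (X x)\<^sup>2 \<partial>N) + 2 * t * (\<integral>x. X x * Y x \<partial>N) + t\<^sup>2 * (\<integral>x. (Y x)\<^sup>2 \<partial>N)"
proof -
  have iX: "integrable N (\<lambda>x. (X x)\<^sup>2)" and iY: "integrable N (\<lambda>x. (Y x)\<^sup>2)" using X Y unfolding L2_def by auto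
  have iXY: "integrable N (\<lambda>x. X x * Y x)" by (rule L2_mult_int[OF X Y])
  have "(\<integral>x. (X x + t * Y x)\<^sup>2 \<partial>N) = (\<integral>x. (X x)\<^sup>2 + (2 * t * (X x * Y x) + t\<^sup>2 * (Y x)\<^sup>2) \<partial>N)"
    by (intro Bochner_Integration.integral_cong refl) (simp add: power2_eq_square algebra_simps)
  also have "\<dots> = (\<integral>x. (X x)\<^sup>2 \<partial>N) + ((\<integral>x. 2 * t * (X x * Y x) \<partial>N) + (\<integral>x. t\<^sup>2 * (Y x)\<^sup>2 \<partial>N))"
    using iX iY iXY by (simp add: Bochner_Integration.integral_add)
  also have "\<dots> = (\<integral>x. (X x)\<^sup>2 \<partial>N) + 2 * t * (\<integral>x. X x * Y x \<partial>N) + t\<^sup>2 * (\<integral>x. (Y x)\<^sup>2 \<partial>N)"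
    by simp
  finally show ?thesis .
qed

lemma one_dim: assumes X: "L2 N X" and Y: "L2 N Y" and C: "(\<integral>x. (Y x)\<^sup>2 \<partial>N) > 0"
  shows "(\<integral>x. (X x + (- ((\<integral>x. X x * Y x \<partial>N) / (\<integral>x. (Y x)\<^sup>2 \<partial>N))) * Y x)\<^sup>2 \<partial>N) \<le> (\<integral>x. (X x + t * Y x)\<^sup>2 \<partial>N)"
proof -
  define A where "A = (\<integral>x. (X x)\<^sup>2 \<partial>N)"
  define B where "B = (\<integral>x. X x * Y x \<partial>N)"
  define CC where "CC = (\<integral>x. (Y x)\<^sup>2 \<partial>N)"
  have c: "CC > 0" using C unfolding CC_def .
  have "A + 2 * (- (B / CC)) * B + (- (B / CC))\<^sup>2 * CC \<le> A + 2 * t * B + t\<^sup>2 * CC"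
  proof -
    have "A + 2 * t * B + t\<^sup>2 * CC - (A + 2 * (- (B / CC)) * B + (- (B / CC))\<^sup>2 * CC) = (t * CC + B)\<^sup>2 / CC"
      using c by (simp add: field_simps power2_eq_square)
    moreover have "(t * CC + B)\<^sup>2 / CC \<ge> 0" using c by simp
    ultimately show ?thesis by linarith
  qed
  then show ?thesis
    using expand_sq[OF X Y, of t] expand_sq[OF X Y, of "- (B / CC)"] unfolding A_def B_def CC_def by simp
qed

lemma quad_min:
  assumes "finite J"
  shows "L2 N W0 \<Longrightarrow> (\<And>j. j \<in> J \<Longrightarrow> L2 N (W j)) \<Longrightarrow>
    \<exists>u. \<forall>v. (\<integral>x. (W0 x + (\<Sum>j\<in>J. u j * W j x))\<^sup>2 \<partial>N) \<le> (\<integral>x. (W0 x + (\<Sum>j\<in>J. v j * W j x))\<^sup>2 \<partial>N)"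
  using assms
proof (induction J arbitrary: W0 W rule: finite_induct)
  case empty
  then show ?case by simp
next
  case (insert r J)
  note fin = insert.hyps(1) and rJ = insert.hyps(2)
  have L0: "L2 N W0" by (rule insert.prems(1))
  have LW: "\<And>j. j \<in> J \<Longrightarrow> L2 N (W j)" using insert.prems(2) by auto
  have Lr: "L2 N (W r)" using insert.prems(2) by auto
  define X where "X = (\<lambda>w x. W0 x + (\<Sum>j\<in>J. w j * W j x))"
  have split: "\<And>w x. W0 x + (\<Sum>j\<in>insert r J. w j * W j x) = X w x + w r * W r x"
    unfolding X_def using fin rJ by (simp add: algebra_simps)
  have LX: "\<And>w. L2 N (X w)"
    unfolding X_def by (intro L2_add[OF L0] L2_sum[OF fin] L2_scale LW)
  have LXr: "\<And>w t. L2 N (\<lambda>x. X w x + t * W r x)"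
    by (intro L2_add LX L2_scale Lr)
  have ir: "integrable N (\<lambda>x. (W r x)\<^sup>2)" using Lr unfolding L2_def by auto
  show ?case
  proof (cases "(\<integral>x. (W r x)\<^sup>2 \<partial>N) = 0")
    case True
    have ae: "AE x in N. (W r x)\<^sup>2 = 0"
      using integral_nonneg_eq_0_iff_AE[OF ir] True by simp
    obtain u where u: "\<forall>v. (\<integral>x. (X u x)\<^sup>2 \<partial>N) \<le> (\<integral>x. (X v x)\<^sup>2 \<partial>N)"
      using insert.IH[of W0 W, OF L0 LW] unfolding X_def by blast
    have eq: "\<And>w. (\<integral>x. (X w x + w r * W r x)\<^sup>2 \<partial>N) = (\<integral>x. (X w x)\<^sup>2 \<partial>N)"
    proof -
      fix w
      have m1: "(\<lambda>x. (X w x + w r * W r x)\<^sup>2) \<in> borel_measurable N"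
        using LXr unfolding L2_def by auto
      have m2: "(\<lambda>x. (X w x)\<^sup>2) \<in> borel_measurable N" using LX unfolding L2_def by auto
      have "AE x in N. (X w x + w r * W r x)\<^sup>2 = (X w x)\<^sup>2"
        using ae by eventually_elim simp
      then show "(\<integral>x. (X w x + w r * W r x)\<^sup>2 \<partial>N) = (\<integral>x. (X w x)\<^sup>2 \<partial>N)"
        by (rule integral_cong_AE[OF m1 m2])
    qed
    show ?thesis
      by (rule exI[of _ u]) (simp add: split eq u)
  next
    case False
    define a where "a = (\<integral>x. (W r x)\<^sup>2 \<partial>N)"
    have "0 \<le> a" unfolding a_def by (rule Bochner_Integration.integral_nonneg) simp
    then have apos: "a > 0" using False unfolding a_def by linarith
    define \<beta> where "\<beta> = (\<lambda>j. (\<integral>x. W j x * W r x \<partial>N) / a)"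
    define \<beta>0 where "\<beta>0 = (\<integral>x. W0 x * W r x \<partial>N) / a"
    define W0' where "W0' = (\<lambda>x. W0 x + (- \<beta>0) * W r x)"
    define W' where "W' = (\<lambda>j x. W j x + (- \<beta> j) * W r x)"
    have L0': "L2 N W0'" unfolding W0'_def by (intro L2_add L0 L2_scale Lr)
    have LW': "\<And>j. j \<in> J \<Longrightarrow> L2 N (W' j)" unfolding W'_def by (intro L2_add LW L2_scale Lr)
    obtain u' where u': "\<forall>v. (\<integral>x. (W0' x + (\<Sum>j\<in>J. u' j * W' j x))\<^sup>2 \<partial>N) \<le> (\<integral>x. (W0' x + (\<Sum>j\<in>J. v j * W' j x))\<^sup>2 \<partial>N)"
      using insert.IH[of W0' W', OF L0' LW'] by blast
    have key: "\<And>w x. X w x + (- (\<beta>0 + (\<Sum>j\<in>J. w j * \<beta> j))) * W r x = W0' x + (\<Sum>j\<in>J. w j * W' j x)"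
    proof -
      fix w x
      have "(\<Sum>j\<in>J. w j * W' j x) = (\<Sum>j\<in>J. w j * W j x) - (\<Sum>j\<in>J. w j * \<beta> j) * W r x"
      proof -
        have "(\<Sum>j\<in>J. w j * W' j x) = (\<Sum>j\<in>J. w j * W j x - (w j * \<beta> j) * W r x)"
          unfolding W'_def by (intro sum.cong refl) (simp add: algebra_simps)
        also have "\<dots> = (\<Sum>j\<in>J. w j * W j x) - (\<Sum>j\<in>J. w j * \<beta> j) * W r x"
          by (simp add: sum_subtractf sum_distrib_right)
        finally show ?thesis .
      qed
      then show "X w x + (- (\<beta>0 + (\<Sum>j\<in>J. w j * \<beta> j))) * W r x = W0' x + (\<Sum>j\<in>J. w j * W' j x)"
        unfolding X_def W0'_def by (simp add: algebra_simps)
    qed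
    have coef: "\<And>w. (\<integral>x. X w x * W r x \<partial>N) / a = \<beta>0 + (\<Sum>j\<in>J. w j * \<beta> j)"
    proof -
      fix w
      have i0: "integrable N (\<lambda>x. W0 x * W r x)" by (rule L2_mult_int[OF L0 Lr])
      have ij: "\<And>j. j \<in> J \<Longrightarrow> integrable N (\<lambda>x. w j * (W j x * W r x))"
        using L2_mult_int[OF LW Lr] by auto
      have "(\<integral>x. X w x * W r x \<partial>N) = (\<integral>x. W0 x * W r x + (\<Sum>j\<in>J. w j * (W j x * W r x)) \<partial>N)"
        unfolding X_def by (intro Bochner_Integration.integral_cong refl) (simp add: distrib_right sum_distrib_right mult.assoc)
      also have "\<dots> = (\<integral>x. W0 x * W r x \<partial>N) + (\<Sum>j\<in>J. w j * (\<integral>x. W j x * W r x \<partial>N))"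
        using i0 ij by (simp add: Bochner_Integration.integral_add integrable_sum integral_sum)
      finally show "(\<integral>x. X w x * W r x \<partial>N) / a = \<beta>0 + (\<Sum>j\<in>J. w j * \<beta> j)"
        unfolding \<beta>0_def \<beta>_def using apos by (simp add: add_divide_distrib sum_divide_distrib)
    qed
    define u where "u = u'(r := - (\<beta>0 + (\<Sum>j\<in>J. u' j * \<beta> j)))"
    have uJ: "\<And>x. X u x = X u' x"
      unfolding X_def u_def using rJ by (intro arg_cong2[where f="(+)"] refl sum.cong) auto
    have ur: "u r = - (\<beta>0 + (\<Sum>j\<in>J. u' j * \<beta> j))" unfolding u_def by simp
    have Qu: "(\<integral>x. (W0 x + (\<Sum>j\<in>insert r J. u j * W j x))\<^sup>2 \<partial>N) = (\<integral>x. (W0' x + (\<Sum>j\<in>J. u' j * W' j x))\<^sup>2 \<partial>N)"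
      unfolding split uJ ur key ..
    show ?thesis
    proof (intro exI[of _ u] allI)
      fix v
      have "(\<integral>x. (W0 x + (\<Sum>j\<in>insert r J. u j * W j x))\<^sup>2 \<partial>N) \<le> (\<integral>x. (W0' x + (\<Sum>j\<in>J. v j * W' j x))\<^sup>2 \<partial>N)"
        using u' Qu by simp
      also have "\<dots> = (\<integral>x. (X v x + (- ((\<integral>x. X v x * W r x \<partial>N) / (\<integral>x. (W r x)\<^sup>2 \<partial>N))) * W r x)\<^sup>2 \<partial>N)"
        using coef[of v] key[of v] unfolding a_def by simp
      also have "\<dots> \<le> (\<integral>x. (X v x + v r * W r x)\<^sup>2 \<partial>N)"
        by (rule one_dim[OF LX Lr]) (use apos a_def in simp)
      also have "\<dots> = (\<integral>x. (W0 x + (\<Sum>j\<in>insert r J. v j * W j x))\<^sup>2 \<partial>N)"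
        unfolding split ..
      finally show "(\<integral>x. (W0 x + (\<Sum>j\<in>insert r J. u j * W j x))\<^sup>2 \<partial>N) \<le> (\<integral>x. (W0 x + (\<Sum>j\<in>insert r J. v j * W j x))\<^sup>2 \<partial>N)" .
    qed
  qed
qed

definition Tr :: "real \<Rightarrow> real \<Rightarrow> nat \<Rightarrow> (nat \<Rightarrow> real) \<Rightarrow> (nat \<Rightarrow> real)" where
  "Tr t1 t2 n x = (\<lambda>i\<in>{..<n}. t1 + t2 * x i)"

lemma lin_Tr: assumes "t2 > 0"
  shows "lin_est n c (Tr t1 t2 n x) = t1 * (\<Sum>i<n. c i) + t2 * lin_est n c x"
proof -
  have "ord_stat n (Tr t1 t2 n x) = ord_stat n (\<lambda>j. t1 + t2 * x j)"
    by (rule ord_stat_cong) (simp add: Tr_def)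
  then have "\<And>i. i < n \<Longrightarrow> ord_stat n (Tr t1 t2 n x) i = t1 + t2 * ord_stat n x i"
    using ord_stat_affine[OF assms] by simp
  then have "lin_est n c (Tr t1 t2 n x) = (\<Sum>i<n. t1 * c i + t2 * (c i * ord_stat n x i))"
    unfolding lin_est_def by (intro sum.cong refl) (simp add: algebra_simps)
  also have "\<dots> = t1 * (\<Sum>i<n. c i) + t2 * lin_est n c x"
    unfolding lin_est_def by (simp add: sum.distrib sum_distrib_left)
  finally show ?thesis .
qed

lemma Tr_meas_Pb: "Tr t1 t2 n \<in> measurable (Pb n) (Pb n)"
  unfolding Tr_def Pb_def by (intro measurable_restrict) (simp add: measurable_component_singleton)

context
  fixes M :: "real measure"
  assumes RD: "real_distribution M" and SQ: "integrable M (\<lambda>x. x\<^sup>2)"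
begin

interpretation real_distribution M by (rule RD)

lemma finP: "finite_measure (P M n)"
  using prob_P[OF RD] by (simp add: prob_space_def)

lemma ord_L2: assumes i: "i < n" shows "L2 (P M n) (\<lambda>x. ord_stat n x i)"
proof -
  have m: "(\<lambda>x. ord_stat n x i) \<in> borel_measurable (P M n)" by (rule meas_P[OF RD ord_stat_meas[OF i]])
  have i1: "integrable (P M n) (\<lambda>x. \<Sum>j<n. (x j)\<^sup>2)"
    by (rule Bochner_Integration.integrable_sum) (use comp_integrable[OF RD _ SQ] in auto)
  have m2: "(\<lambda>x. (ord_stat n x i)\<^sup>2) \<in> borel_measurable (P M n)" using m by measurable
  have ae: "AE x in P M n. norm ((ord_stat n x i)\<^sup>2) \<le> norm (\<Sum>j<n. (x j)\<^sup>2)"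
  proof (intro AE_I2)
    fix x
    have "(ord_stat n x i)\<^sup>2 \<le> (\<Sum>j<n. (x j)\<^sup>2)" by (rule ord_sq_le[OF i])
    moreover have "0 \<le> (\<Sum>j<n. (x j)\<^sup>2)" by (intro sum_nonneg) simp
    ultimately show "norm ((ord_stat n x i)\<^sup>2) \<le> norm (\<Sum>j<n. (x j)\<^sup>2)" by simp
  qed
  show ?thesis unfolding L2_def using m Bochner_Integration.integrable_bound[OF i1 m2 ae] by simp
qed

lemma lin_L2: "L2 (P M n) (lin_est n c)"
proof -
  have "L2 (P M n) (\<lambda>x. \<Sum>i<n. c i * ord_stat n x i)"
    by (intro L2_sum L2_scale ord_L2) auto
  then show ?thesis unfolding lin_est_def by (rule L2_cong) simp
qed

lemma lin_int: "integrable (P M n) (lin_est n c)"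
  by (rule L2_int[OF finP lin_L2])

definition alpha where "alpha n i = (\<integral>x. ord_stat n x i \<partial>P M n)"

lemma lin_mean: "(\<integral>x. lin_est n c x \<partial>P M n) = (\<Sum>i<n. c i * alpha n i)"
proof -
  have "\<And>i. i < n \<Longrightarrow> integrable (P M n) (\<lambda>x. ord_stat n x i)"
    using L2_int[OF finP ord_L2] by auto
  then show ?thesis unfolding lin_est_def alpha_def by (simp add: integral_sum)
qed

lemma LS_prob: "prob_space (loc_scale M t1 t2)"
  unfolding loc_scale_def by (rule prob_space_distr) (simp add: measurable_cong_sets[OF events_eq_borel refl])

lemma sets_LS: "sets (loc_scale M t1 t2) = sets borel" unfolding loc_scale_def by simp

lemma sample_eq: "sample M n t1 t2 = distr (P M n) (Pb n) (Tr t1 t2 n)"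
proof -
  let ?f = "\<lambda>z::real. t1 + t2 * z"
  let ?LS = "loc_scale M t1 t2"
  have fm: "?f \<in> measurable M ?LS"
    unfolding measurable_cong_sets[OF events_eq_borel sets_LS] by measurable
  have "distr (P M n) (PiM {..<n} (\<lambda>_. ?LS)) (compose {..<n} ?f) = PiM {..<n} (\<lambda>i. distr M ?LS ?f)"
    unfolding P_def[OF RD]
    by (rule distr_PiM_finite_prob_space') (auto simp: prob_space_axioms LS_prob fm)
  also have "(\<lambda>i. distr M ?LS ?f) = (\<lambda>i. ?LS)"
  proof -
    have "distr M ?LS ?f = distr M borel ?f" by (rule distr_cong) (simp_all add: sets_LS)
    then show ?thesis by (simp add: loc_scale_def[symmetric])
  qed
  also have "PiM {..<n} (\<lambda>i. ?LS) = sample M n t1 t2" unfolding sample_def ..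
  finally have e: "sample M n t1 t2 = distr (P M n) (PiM {..<n} (\<lambda>_. ?LS)) (compose {..<n} ?f)" ..
  have "distr (P M n) (PiM {..<n} (\<lambda>_. ?LS)) (compose {..<n} ?f) = distr (P M n) (Pb n) (Tr t1 t2 n)"
  proof (rule distr_cong)
    show "sets (PiM {..<n} (\<lambda>_. ?LS)) = sets (Pb n)" unfolding Pb_def by (intro sets_PiM_cong) (simp_all add: sets_LS)
    fix x show "compose {..<n} ?f x = Tr t1 t2 n x" by (simp add: compose_def Tr_def)
  qed simp
  with e show ?thesis by simp
qed

lemma Tr_meas: "Tr t1 t2 n \<in> measurable (P M n) (Pb n)"
  using measurable_cong_sets[OF sets_P[OF RD] refl] Tr_meas_Pb by blast

lemma sample_integral: "(g :: _ \<Rightarrow> real) \<in> borel_measurable (Pb n) \<Longrightarrow> (\<integral>y. g y \<partial>sample M n t1 t2) = (\<integral>x. g (Tr t1 t2 n x) \<partial>P M n)"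
  unfolding sample_eq by (rule integral_distr[OF Tr_meas])

lemma sample_integrable: "(g :: _ \<Rightarrow> real) \<in> borel_measurable (Pb n) \<Longrightarrow> integrable (sample M n t1 t2) g \<longleftrightarrow> integrable (P M n) (\<lambda>x. g (Tr t1 t2 n x))"
  unfolding sample_eq by (rule integrable_distr_eq[OF Tr_meas])

lemma sample_lin_int: "t2 > 0 \<Longrightarrow> integrable (sample M n t1 t2) (lin_est n c)"
proof -
  assume t: "t2 > 0"
  interpret PP: prob_space "P M n" by (rule prob_P[OF RD])
  have "integrable (P M n) (\<lambda>x. t1 * (\<Sum>i<n. c i) + t2 * lin_est n c x)"
    using lin_int[of n c] by simp
  then show ?thesis using sample_integrable[OF lin_est_meas] lin_Tr[OF t] by simp
qed

lemma sample_mean: "t2 > 0 \<Longrightarrow> (\<integral>y. lin_est n c y \<partial>sample M n t1 t2) = t1 * (\<Sum>i<n. c i) + t2 * (\<integral>x. lin_est n c x \<partial>P M n)"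
proof -
  assume t: "t2 > 0"
  interpret PP: prob_space "P M n" by (rule prob_P[OF RD])
  show ?thesis using sample_integral[OF lin_est_meas] lin_Tr[OF t] lin_int by (simp add: PP.prob_space)
qed

lemma sample_var: "t2 > 0 \<Longrightarrow> var_of (sample M n t1 t2) (lin_est n c) = t2\<^sup>2 * var_of (P M n) (lin_est n c)"
proof -
  assume t: "t2 > 0"
  interpret PP: prob_space "P M n" by (rule prob_P[OF RD])
  let ?m = "(\<integral>y. lin_est n c y \<partial>sample M n t1 t2)"
  let ?e = "(\<integral>x. lin_est n c x \<partial>P M n)"
  have gm: "(\<lambda>y. (lin_est n c y - ?m)\<^sup>2) \<in> borel_measurable (Pb n)" by measurable
  have "var_of (sample M n t1 t2) (lin_est n c) = (\<integral>x. (lin_est n c (Tr t1 t2 n x) - ?m)\<^sup>2 \<partial>P M n)"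
    unfolding var_of_def by (rule sample_integral[OF gm])
  also have "\<dots> = (\<integral>x. t2\<^sup>2 * (lin_est n c x - ?e)\<^sup>2 \<partial>P M n)"
    unfolding sample_mean[OF t] lin_Tr[OF t]
    by (intro Bochner_Integration.integral_cong refl) (simp add: power2_eq_square algebra_simps)
  also have "\<dots> = t2\<^sup>2 * var_of (P M n) (lin_est n c)" unfolding var_of_def by simp
  finally show ?thesis .
qed

lemma sample_prob: "t2 > 0 \<Longrightarrow>
  measure (sample M n t1 t2) {x \<in> space (sample M n t1 t2). \<bar>lin_est n c x - th0\<bar> > e} =
  measure (P M n) {x \<in> space (P M n). \<bar>t1 * (\<Sum>i<n. c i) + t2 * lin_est n c x - th0\<bar> > e}"
proof -
  assume t: "t2 > 0"
  let ?S = "{x \<in> space (Pb n). \<bar>lin_est n c x - th0\<bar> > e}"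
  have S: "?S \<in> sets (Pb n)" by measurable
  have sp: "space (sample M n t1 t2) = space (Pb n)" unfolding sample_eq by simp
  have "measure (sample M n t1 t2) ?S = measure (P M n) (Tr t1 t2 n -` ?S \<inter> space (P M n))"
    unfolding sample_eq by (rule measure_distr[OF Tr_meas S])
  also have "Tr t1 t2 n -` ?S \<inter> space (P M n) = {x \<in> space (P M n). \<bar>t1 * (\<Sum>i<n. c i) + t2 * lin_est n c x - th0\<bar> > e}"
    using measurable_space[OF Tr_meas] lin_Tr[OF t] by auto
  finally show ?thesis unfolding sp .
qed

end

definition AA :: "nat \<Rightarrow> real" where "AA k = (if k = 1 then 1 else 0)"
definition BB :: "nat \<Rightarrow> real" where "BB k = (if k = 1 then 0 else 1)"

lemma theta_AB: "theta k t1 t2 = t1 * AA k + t2 * BB k"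
  unfolding theta_def AA_def BB_def by simp

lemma lin_cong: "(\<And>i. i < n \<Longrightarrow> c i = d i) \<Longrightarrow> lin_est n c = lin_est n d"
  unfolding lin_est_def by (intro ext sum.cong) auto

context
  fixes M :: "real measure"
  assumes RD: "real_distribution M" and SQ: "integrable M (\<lambda>x. x\<^sup>2)"
begin

interpretation real_distribution M by (rule RD)

lemma unbiased_iff: "unbiased M k n c \<longleftrightarrow> (\<Sum>i<n. c i) = AA k \<and> (\<integral>x. lin_est n c x \<partial>P M n) = BB k"
proof
  assume u: "unbiased M k n c"
  have e1: "(\<integral>y. lin_est n c y \<partial>sample M n 0 1) = theta k 0 1" using u unfolding unbiased_def by simp
  have e2: "(\<integral>y. lin_est n c y \<partial>sample M n 1 1) = theta k 1 1" using u unfolding unbiased_def by simp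
  have m: "(\<integral>x. lin_est n c x \<partial>P M n) = BB k"
    using e1 sample_mean[OF RD SQ, of 1 n 0 c] by (simp add: theta_AB)
  moreover have "(\<Sum>i<n. c i) = AA k"
    using e2 sample_mean[OF RD SQ, of 1 n 1 c] m by (simp add: theta_AB)
  ultimately show "(\<Sum>i<n. c i) = AA k \<and> (\<integral>x. lin_est n c x \<partial>P M n) = BB k" by simp
next
  assume h: "(\<Sum>i<n. c i) = AA k \<and> (\<integral>x. lin_est n c x \<partial>P M n) = BB k"
  show "unbiased M k n c" unfolding unbiased_def
  proof (intro allI impI conjI)
    fix t1 t2 :: real assume t: "t2 > 0"
    show "integrable (sample M n t1 t2) (lin_est n c)" by (rule sample_lin_int[OF RD SQ t])
    show "(\<integral>y. lin_est n c y \<partial>sample M n t1 t2) = theta k t1 t2"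
      using sample_mean[OF RD SQ t] h by (simp add: theta_AB)
  qed
qed

lemma var_nonneg: "0 \<le> var_of N f" unfolding var_of_def by simp

lemma blue_from_min:
  assumes u: "unbiased M k n c"
    and min: "\<And>c'. unbiased M k n c' \<Longrightarrow> var_of (P M n) (lin_est n c) \<le> var_of (P M n) (lin_est n c')"
  shows "is_BLUE M k n c"
  unfolding is_BLUE_def
proof (intro conjI allI impI u)
  fix c' :: "nat \<Rightarrow> real" and t1 t2 :: real
  assume u': "unbiased M k n c'" and t: "t2 > 0"
  show "var_of (sample M n t1 t2) (lin_est n c) \<le> var_of (sample M n t1 t2) (lin_est n c')"
    unfolding sample_var[OF RD SQ t] using min[OF u'] by (simp add: mult_left_mono)
qed

end

context
  fixes M :: "real measure"
  assumes RD: "real_distribution M" and SQ: "integrable M (\<lambda>x. x\<^sup>2)"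
    and VP: "var_of M (\<lambda>x. x) > 0"
begin

interpretation real_distribution M by (rule RD)

lemma dlpos: "dl M > 0" by (rule dl_pos[OF RD SQ VP])

definition bk where "bk k = (if k = 1 then - mu M / dl M else 1 / dl M)"
definition c0 where "c0 k n = ccoef (AA k) (bk k) n"

lemma ccoef_mean: "2 \<le> n \<Longrightarrow> (\<integral>x. lin_est n (ccoef a b n) x \<partial>P M n) = a * mu M + b * dl M"
proof -
  assume n: "2 \<le> n"
  have "lin_est n (ccoef a b n) = Ustat a b n" using Ustat_lin[OF n] by (simp add: fun_eq_iff)
  then show ?thesis using U_mean[OF RD SQ n] by (simp add: th_def[OF RD SQ])
qed

lemma c0_sum: "2 \<le> n \<Longrightarrow> (\<Sum>i<n. c0 k n i) = AA k"
  unfolding c0_def by (rule ccoef_sum)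

lemma c0_mean: "2 \<le> n \<Longrightarrow> (\<integral>x. lin_est n (c0 k n) x \<partial>P M n) = BB k"
  unfolding c0_def using ccoef_mean dlpos by (simp add: AA_def BB_def bk_def)

lemma c0_unbiased: "2 \<le> n \<Longrightarrow> unbiased M k n (c0 k n)"
  using unbiased_iff[OF RD SQ] c0_sum c0_mean by simp

lemma c0_var: "2 \<le> n \<Longrightarrow> var_of (P M n) (lin_est n (c0 k n)) \<le> 8 * DD M (AA k) (bk k) / real n"
proof -
  assume n: "2 \<le> n"
  have "lin_est n (c0 k n) = Ustat (AA k) (bk k) n" unfolding c0_def using Ustat_lin[OF n] by (simp add: fun_eq_iff)
  then show ?thesis using U_var[OF RD SQ n] by simp
qed

end

context
  fixes M :: "real measure"
  assumes RD: "real_distribution M" and SQ: "integrable M (\<lambda>x. x\<^sup>2)"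
    and VP: "var_of M (\<lambda>x. x) > 0"
begin

interpretation real_distribution M by (rule RD)

abbreviation "al \<equiv> alpha M"

lemma Ealpha: "(\<integral>x. lin_est n c x \<partial>P M n) = (\<Sum>i<n. c i * al n i)"
  by (rule lin_mean[OF RD SQ])

definition g1 where "g1 n = ccoef 1 0 n"
definition g2 where "g2 n = ccoef 0 1 n"

definition cu where "cu k n u i = c0 M k n i + u i - (\<Sum>j<n. u j) * g1 n i
   - ((\<Sum>j<n. u j * al n j) - mu M * (\<Sum>j<n. u j)) / dl M * g2 n i"

definition WW where "WW n j x = ord_stat n x j - lin_est n (g1 n) x - ((al n j - mu M) / dl M) * lin_est n (g2 n) x"

lemma g_facts: assumes n: "2 \<le> n"
  shows "(\<Sum>i<n. g1 n i) = 1" "(\<Sum>i<n. g2 n i) = 0"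
    "(\<Sum>i<n. g1 n i * al n i) = mu M" "(\<Sum>i<n. g2 n i * al n i) = dl M"
  using ccoef_sum[OF n] ccoef_mean[OF RD SQ VP n] Ealpha unfolding g1_def g2_def by auto

lemma lin_cu: "lin_est n (cu k n u) x - BB k = (lin_est n (c0 M k n) x - BB k) + (\<Sum>j<n. u j * WW n j x)"
proof -
  let ?s = "ord_stat n x"
  let ?S = "\<Sum>j<n. u j"
  let ?R = "((\<Sum>j<n. u j * al n j) - mu M * ?S) / dl M"
  have "lin_est n (cu k n u) x = (\<Sum>i<n. c0 M k n i * ?s i + u i * ?s i - ?S * (g1 n i * ?s i) - ?R * (g2 n i * ?s i))"
    unfolding lin_est_def cu_def by (intro sum.cong refl) (simp add: algebra_simps)
  also have "\<dots> = lin_est n (c0 M k n) x + (\<Sum>i<n. u i * ?s i) - ?S * lin_est n (g1 n) x - ?R * lin_est n (g2 n) x"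
    unfolding lin_est_def by (simp add: sum.distrib sum_subtractf sum_distrib_left)
  finally have L: "lin_est n (cu k n u) x = lin_est n (c0 M k n) x + (\<Sum>i<n. u i * ?s i) - ?S * lin_est n (g1 n) x - ?R * lin_est n (g2 n) x" .
  have "(\<Sum>j<n. u j * WW n j x) = (\<Sum>j<n. u j * ?s j - u j * lin_est n (g1 n) x - (u j * al n j - mu M * u j) / dl M * lin_est n (g2 n) x)"
    unfolding WW_def by (intro sum.cong refl) (simp add: algebra_simps diff_divide_distrib)
  also have "\<dots> = (\<Sum>j<n. u j * ?s j) - (\<Sum>j<n. u j * lin_est n (g1 n) x) - (\<Sum>j<n. (u j * al n j - mu M * u j) / dl M * lin_est n (g2 n) x)"
    by (simp only: sum_subtractf)
  also have "(\<Sum>j<n. u j * lin_est n (g1 n) x) = ?S * lin_est n (g1 n) x"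
    by (simp only: sum_distrib_right)
  also have "(\<Sum>j<n. (u j * al n j - mu M * u j) / dl M * lin_est n (g2 n) x) = (\<Sum>j<n. u j * al n j - mu M * u j) / dl M * lin_est n (g2 n) x"
    by (simp only: sum_distrib_right[symmetric] sum_divide_distrib[symmetric])
  also have "(\<Sum>j<n. u j * al n j - mu M * u j) = (\<Sum>j<n. u j * al n j) - mu M * ?S"
    by (simp only: sum_subtractf sum_distrib_left)
  finally show ?thesis using L by simp
qed

lemma sum_cu: "2 \<le> n \<Longrightarrow> (\<Sum>i<n. cu k n u i) = AA k"
proof -
  assume n: "2 \<le> n"
  let ?S = "\<Sum>j<n. u j"
  let ?R = "((\<Sum>j<n. u j * al n j) - mu M * ?S) / dl M"
  have "(\<Sum>i<n. cu k n u i) = (\<Sum>i<n. c0 M k n i) + ?S - ?S * (\<Sum>i<n. g1 n i) - ?R * (\<Sum>i<n. g2 n i)"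
    unfolding cu_def by (simp add: sum.distrib sum_subtractf sum_distrib_left)
  then show ?thesis using g_facts[OF n] c0_sum[OF RD SQ VP n] by simp
qed

lemma mean_cu: "2 \<le> n \<Longrightarrow> (\<integral>x. lin_est n (cu k n u) x \<partial>P M n) = BB k"
proof -
  assume n: "2 \<le> n"
  let ?S = "\<Sum>j<n. u j"
  let ?R = "((\<Sum>j<n. u j * al n j) - mu M * ?S) / dl M"
  have "(\<integral>x. lin_est n (cu k n u) x \<partial>P M n) = (\<Sum>i<n. cu k n u i * al n i)" by (rule Ealpha)
  also have "\<dots> = (\<Sum>i<n. c0 M k n i * al n i + u i * al n i - ?S * (g1 n i * al n i) - ?R * (g2 n i * al n i))"
    unfolding cu_def by (intro sum.cong refl) (simp add: algebra_simps)
  also have "\<dots> = (\<Sum>i<n. c0 M k n i * al n i) + (\<Sum>i<n. u i * al n i) - ?S * (\<Sum>i<n. g1 n i * al n i) - ?R * (\<Sum>i<n. g2 n i * al n i)"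
    by (simp only: sum.distrib sum_subtractf sum_distrib_left)
  also have "\<dots> = BB k"
    using g_facts[OF n] c0_mean[OF RD SQ VP n, of k] Ealpha[of n "c0 M k n"] dl_pos[OF RD SQ VP] by simp
  finally show ?thesis .
qed

lemma recover: assumes n: "2 \<le> n" and c: "(\<Sum>i<n. c i) = AA k" "(\<integral>x. lin_est n c x \<partial>P M n) = BB k"
  shows "lin_est n (cu k n (\<lambda>j. c j - c0 M k n j)) = lin_est n c"
proof (rule lin_cong)
  fix i assume i: "i < n"
  have S: "(\<Sum>j<n. c j - c0 M k n j) = 0" using c(1) c0_sum[OF RD SQ VP n] by (simp add: sum_subtractf)
  have R: "(\<Sum>j<n. (c j - c0 M k n j) * al n j) = 0"
    using c(2) c0_mean[OF RD SQ VP n, of k] Ealpha[of n c] Ealpha[of n "c0 M k n"]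
    by (simp add: left_diff_distrib sum_subtractf)
  show "cu k n (\<lambda>j. c j - c0 M k n j) i = c i" unfolding cu_def using S R by simp
qed

lemma WW_L2: "j < n \<Longrightarrow> L2 (P M n) (WW n j)"
proof -
  assume j: "j < n"
  have "L2 (P M n) (\<lambda>x. ord_stat n x j + (- 1) * lin_est n (g1 n) x + (- ((al n j - mu M) / dl M)) * lin_est n (g2 n) x)"
    by (intro L2_add L2_scale ord_L2[OF RD SQ j] lin_L2[OF RD SQ])
  then show ?thesis unfolding WW_def by (rule L2_cong) simp
qed

lemma W0_L2: "L2 (P M n) (\<lambda>x. lin_est n (c0 M k n) x - BB k)"
proof -
  have "L2 (P M n) (\<lambda>x. lin_est n (c0 M k n) x + (- BB k))"
    by (intro L2_add lin_L2[OF RD SQ] L2_const[OF finP[OF RD SQ]])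
  then show ?thesis by (rule L2_cong) simp
qed

lemma var_W: "(\<integral>x. lin_est n c x \<partial>P M n) = BB k \<Longrightarrow> var_of (P M n) (lin_est n c) = (\<integral>x. (lin_est n c x - BB k)\<^sup>2 \<partial>P M n)"
  unfolding var_of_def by simp

lemma BLUE_exists: assumes n: "2 \<le> n" shows "\<exists>c. is_BLUE M k n c"
proof -
  obtain u where u: "\<forall>v. (\<integral>x. ((lin_est n (c0 M k n) x - BB k) + (\<Sum>j\<in>{..<n}. u j * WW n j x))\<^sup>2 \<partial>P M n)
       \<le> (\<integral>x. ((lin_est n (c0 M k n) x - BB k) + (\<Sum>j\<in>{..<n}. v j * WW n j x))\<^sup>2 \<partial>P M n)"
    using quad_min[of "{..<n}" "P M n" "\<lambda>x. lin_est n (c0 M k n) x - BB k" "WW n"] W0_L2 WW_L2 by auto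
  let ?c = "cu k n u"
  have ub: "unbiased M k n ?c" using unbiased_iff[OF RD SQ] sum_cu[OF n] mean_cu[OF n] by simp
  show ?thesis
  proof (rule exI[of _ ?c], rule blue_from_min[OF RD SQ ub])
    fix c' assume u': "unbiased M k n c'"
    then have c': "(\<Sum>i<n. c' i) = AA k" "(\<integral>x. lin_est n c' x \<partial>P M n) = BB k" using unbiased_iff[OF RD SQ] by auto
    let ?d = "\<lambda>j. c' j - c0 M k n j"
    have "var_of (P M n) (lin_est n ?c) = (\<integral>x. (lin_est n ?c x - BB k)\<^sup>2 \<partial>P M n)"
      by (rule var_W[OF mean_cu[OF n]])
    also have "\<dots> = (\<integral>x. ((lin_est n (c0 M k n) x - BB k) + (\<Sum>j\<in>{..<n}. u j * WW n j x))\<^sup>2 \<partial>P M n)"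
      by (simp add: lin_cu)
    also have "\<dots> \<le> (\<integral>x. ((lin_est n (c0 M k n) x - BB k) + (\<Sum>j\<in>{..<n}. ?d j * WW n j x))\<^sup>2 \<partial>P M n)"
      using spec[OF u, of ?d] by simp
    also have "\<dots> = (\<integral>x. (lin_est n (cu k n ?d) x - BB k)\<^sup>2 \<partial>P M n)"
      by (simp add: lin_cu)
    also have "\<dots> = (\<integral>x. (lin_est n c' x - BB k)\<^sup>2 \<partial>P M n)"
      unfolding recover[OF n c'] ..
    also have "\<dots> = var_of (P M n) (lin_est n c')" by (rule var_W[OF c'(2), symmetric])
    finally show "var_of (P M n) (lin_est n ?c) \<le> var_of (P M n) (lin_est n c')" .
  qed
qed

end

lemma key_var:
  assumes RD: "real_distribution M" and SQ: "integrable M (\<lambda>x. x\<^sup>2)" and VP: "var_of M (\<lambda>x. x) > 0"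
    and n: "2 \<le> n" and B: "is_BLUE M k n c" and t: "t2 > 0"
  shows "var_of (sample M n t1 t2) (lin_est n c) \<le> t2\<^sup>2 * (8 * DD M (AA k) (bk M k)) / real n"
proof -
  have "var_of (sample M n t1 t2) (lin_est n c) \<le> var_of (sample M n t1 t2) (lin_est n (c0 M k n))"
    using B c0_unbiased[OF RD SQ VP n, of k] t unfolding is_BLUE_def by blast
  also have "\<dots> = t2\<^sup>2 * var_of (P M n) (lin_est n (c0 M k n))" by (rule sample_var[OF RD SQ t])
  also have "\<dots> \<le> t2\<^sup>2 * (8 * DD M (AA k) (bk M k) / real n)"
    by (intro mult_left_mono c0_var[OF RD SQ VP n]) simp
  finally show ?thesis by simp
qed

lemma key_prob:
  assumes RD: "real_distribution M" and SQ: "integrable M (\<lambda>x. x\<^sup>2)" and VP: "var_of M (\<lambda>x. x) > 0"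
    and n: "2 \<le> n" and B: "is_BLUE M k n c" and t: "t2 > 0" and e: "e > 0"
  shows "measure (sample M n t1 t2) {x \<in> space (sample M n t1 t2). \<bar>lin_est n c x - theta k t1 t2\<bar> > e}
     \<le> var_of (sample M n t1 t2) (lin_est n c) / e\<^sup>2"
proof -
  interpret PP: prob_space "P M n" by (rule prob_P[OF RD])
  let ?th = "theta k t1 t2"
  define f where "f = (\<lambda>x. t1 * (\<Sum>i<n. c i) + t2 * lin_est n c x)"
  have ub: "unbiased M k n c" using B unfolding is_BLUE_def by simp
  then have cs: "(\<Sum>i<n. c i) = AA k" "(\<integral>x. lin_est n c x \<partial>P M n) = BB k" using unbiased_iff[OF RD SQ] by auto
  have Lf: "L2 (P M n) f"
    unfolding f_def by (intro L2_add L2_const[OF finP[OF RD SQ]] L2_scale lin_L2[OF RD SQ])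
  have fm: "f \<in> borel_measurable (P M n)" using Lf unfolding L2_def by simp
  have fi: "integrable (P M n) (\<lambda>x. (f x)\<^sup>2)" using Lf unfolding L2_def by simp
  have Ef: "PP.expectation f = ?th"
    unfolding f_def using lin_int[OF RD SQ, of n c] cs by (simp add: PP.prob_space theta_AB)
  have Vf: "PP.variance f = var_of (sample M n t1 t2) (lin_est n c)"
  proof -
    have "PP.variance f = (\<integral>x. (f x - ?th)\<^sup>2 \<partial>P M n)" unfolding Ef ..
    also have "\<dots> = (\<integral>x. t2\<^sup>2 * (lin_est n c x - (\<integral>x. lin_est n c x \<partial>P M n))\<^sup>2 \<partial>P M n)"
      unfolding theta_AB f_def cs by (intro Bochner_Integration.integral_cong refl) (simp add: power2_eq_square algebra_simps)
    also have "\<dots> = t2\<^sup>2 * var_of (P M n) (lin_est n c)" unfolding var_of_def by simp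
    finally show ?thesis using sample_var[OF RD SQ t] by simp
  qed
  have "measure (sample M n t1 t2) {x \<in> space (sample M n t1 t2). \<bar>lin_est n c x - ?th\<bar> > e}
      = measure (P M n) {x \<in> space (P M n). \<bar>f x - ?th\<bar> > e}"
    unfolding f_def by (rule sample_prob[OF RD SQ t])
  also have "\<dots> \<le> measure (P M n) {x \<in> space (P M n). e \<le> \<bar>f x - PP.expectation f\<bar>}"
  proof (rule PP.finite_measure_mono)
    show "{x \<in> space (P M n). \<bar>f x - ?th\<bar> > e} \<subseteq> {x \<in> space (P M n). e \<le> \<bar>f x - PP.expectation f\<bar>}"
      unfolding Ef by auto
    show "{x \<in> space (P M n). e \<le> \<bar>f x - PP.expectation f\<bar>} \<in> sets (P M n)" using fm by measurable
  qed
  also have "\<dots> \<le> PP.variance f / e\<^sup>2" by (rule PP.Chebyshev_inequality[OF fm fi e])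
  finally show ?thesis unfolding Vf .
qed

theorem lemma2p1:
  fixes M :: "real measure" and k :: nat
  assumes "real_distribution M"
    and "integrable M (\<lambda>x. x\<^sup>2)"
    and "var_of M (\<lambda>x. x) > 0"
    and "k \<in> {1, 2}"
  shows "(\<forall>n\<ge>2. \<exists>c. is_BLUE M k n c) \<and>
    (\<forall>c :: nat \<Rightarrow> nat \<Rightarrow> real. (\<forall>n\<ge>2. is_BLUE M k n (c n)) \<longrightarrow>
      (\<forall>t1 t2. t2 > 0 \<longrightarrow>
         (\<forall>\<epsilon>>0. (\<lambda>n. measure (sample M n t1 t2)
                 {x \<in> space (sample M n t1 t2). \<bar>lin_est n (c n) x - theta k t1 t2\<bar> > \<epsilon>})
               \<longlonglongrightarrow> 0) \<and>
         (\<lambda>n. var_of (sample M n t1 t2) (lin_est n (c n))) \<in> O(\<lambda>n. 1 / real n)))"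
proof (intro conjI allI impI)
  note RD = assms(1) and SQ = assms(2) and VP = assms(3)
  fix n :: nat assume "2 \<le> n"
  then show "\<exists>c. is_BLUE M k n c" by (rule BLUE_exists[OF RD SQ VP])
next
  note RD = assms(1) and SQ = assms(2) and VP = assms(3)
  fix c :: "nat \<Rightarrow> nat \<Rightarrow> real" and t1 t2 :: real and \<epsilon> :: real
  assume B: "\<forall>n\<ge>2. is_BLUE M k n (c n)" and t: "t2 > 0" and e: "\<epsilon> > 0"
  define K where "K = t2\<^sup>2 * (8 * DD M (AA k) (bk M k))"
  let ?m = "\<lambda>n. measure (sample M n t1 t2) {x \<in> space (sample M n t1 t2). \<bar>lin_est n (c n) x - theta k t1 t2\<bar> > \<epsilon>}"
  have ev: "eventually (\<lambda>n. ?m n \<le> K / \<epsilon>\<^sup>2 * (1 / real n)) sequentially"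
    unfolding eventually_sequentially
  proof (intro exI[of _ 2] allI impI)
    fix n :: nat assume n: "2 \<le> n"
    have "?m n \<le> var_of (sample M n t1 t2) (lin_est n (c n)) / \<epsilon>\<^sup>2"
      using key_prob[OF RD SQ VP n _ t e] B n by simp
    also have "\<dots> \<le> (K / real n) / \<epsilon>\<^sup>2"
      using key_var[OF RD SQ VP n _ t] B n e unfolding K_def by (intro divide_right_mono) auto
    finally show "?m n \<le> K / \<epsilon>\<^sup>2 * (1 / real n)" by (simp add: mult.commute)
  qed
  have lim: "(\<lambda>n. K / \<epsilon>\<^sup>2 * (1 / real n)) \<longlonglongrightarrow> 0"
    using lim_const_over_n[of "K / \<epsilon>\<^sup>2"] by simp
  show "?m \<longlonglongrightarrow> 0"
    by (rule tendsto_sandwich[OF _ ev tendsto_const lim]) (simp add: measure_nonneg)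
next
  note RD = assms(1) and SQ = assms(2) and VP = assms(3)
  fix c :: "nat \<Rightarrow> nat \<Rightarrow> real" and t1 t2 :: real
  assume B: "\<forall>n\<ge>2. is_BLUE M k n (c n)" and t: "t2 > 0"
  define K where "K = t2\<^sup>2 * (8 * DD M (AA k) (bk M k))"
  show "(\<lambda>n. var_of (sample M n t1 t2) (lin_est n (c n))) \<in> O(\<lambda>n. 1 / real n)"
  proof (rule bigoI)
    show "eventually (\<lambda>n. norm (var_of (sample M n t1 t2) (lin_est n (c n))) \<le> K * norm (1 / real n)) sequentially"
      unfolding eventually_sequentially
    proof (intro exI[of _ 2] allI impI)
      fix n :: nat assume n: "2 \<le> n"
      have "var_of (sample M n t1 t2) (lin_est n (c n)) \<le> K / real n"
        using key_var[OF RD SQ VP n _ t] B n unfolding K_def by simp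
      then show "norm (var_of (sample M n t1 t2) (lin_est n (c n))) \<le> K * norm (1 / real n)"
        using var_nonneg[OF RD SQ, of "sample M n t1 t2" "lin_est n (c n)"] by simp
    qed
  qed
qed

end
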